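(* Fix an integer $N\ge0$, $y\in\mathbb{C}^*$ and a square root $\sqrt{pq}$. For $\underline u=(\zeta,\chi,\kappa)\in(\mathbb{C}^* )^3$ generic, define $(N+1)\times(N+1)$ matrices, with indices $n,m=0,\dots,N$, $$S_1(\underline u)=\big(M_{nm}(\zeta^2,\chi^2)\big)_{n,m},\qquad S_2(\underline u)=\operatorname{diag}\big(D_n(\zeta^2;b(\underline u),c(\underline u))\big)_n,$$ where $$b(\underline u)=\sqrt{pq}\,\frac{\zeta\chi}{\kappa}\,y,\qquad c(\underline u)=\frac{\sqrt{pq}}{p}\,\frac{\zeta\chi}{\kappa}\,y^{-1}.$$ Let $s_1(\zeta,\chi,\kappa)=(\chi,\zeta,\kappa)$ and $s_2(\zeta,\chi,\kappa)=(\zeta,\kappa,\chi)$. Then: (i) $S_2(s_2\underline u)\,S_2(\underline u)=I$; (ii) $S_1(s_2s_1\underline u)\,S_2(s_1\underline u)\,S_1(\underline u)=S_2(s_1s_2\underline u)\,S_1(s_2\underline u)\,S_2(\underline u)$.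
   Context: Fix $p,q\in\mathbb{C}$ with $0<|p|,|q|<1$. Notation: $(z;p)_\infty=\prod_{j\ge0}(1-zp^j)$; $\theta(z;p)=(z;p)_\infty(p/z;p)_\infty$. The elliptic Pochhammer symbol is $\theta(z)_n=\prod_{j=0}^{n-1}\theta(zq^j;p)$ for $n\ge0$, and $\theta(z_1,\dots,z_r)_n=\prod_i\theta(z_i)_n$. For $0\le m\le N$ define $$M_{Nm}(a,k)=\frac{\theta(k)_{N+m}\,\theta(k/a)_{N-m}}{\theta(qa)_{N+m}\,\theta(q)_{N-m}}\,\frac{\theta(aq^{2m};p)}{\theta(a;p)}\,a^{N-m},$$ and set $M_{Nm}(a,k)=0$ for $m>N$. Also define $$D_n(a;b,c)=\frac{\theta(b,c)_n}{\theta(aq/b,aq/c)_n}\Big(\frac{aq}{bc}\Big)^n.$$ "Generic" means that all theta functions appearing in denominators are nonzero. *)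

theory Defs
  imports "HOL-Analysis.Analysis"
begin

definition qpoch_inf :: "complex \<Rightarrow> complex \<Rightarrow> complex" where
  "qpoch_inf z p = (\<Prod>j. 1 - z * p ^ j)"

definition theta :: "complex \<Rightarrow> complex \<Rightarrow> complex" where
  "theta z p = qpoch_inf z p * qpoch_inf (p / z) p"

definition epoch :: "complex \<Rightarrow> complex \<Rightarrow> complex \<Rightarrow> nat \<Rightarrow> complex" where
  "epoch p q z n = (\<Prod>j<n. theta (z * q ^ j) p)"

definition Mcoef :: "complex \<Rightarrow> complex \<Rightarrow> nat \<Rightarrow> nat \<Rightarrow> complex \<Rightarrow> complex \<Rightarrow> complex" where
  "Mcoef p q n m a k =
     (if m \<le> n then
        (epoch p q k (n + m) * epoch p q (k / a) (n - m))
          / (epoch p q (q * a) (n + m) * epoch p q q (n - m))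
        * (theta (a * q ^ (2 * m)) p / theta a p) * a ^ (n - m)
      else 0)"

definition Dcoef :: "complex \<Rightarrow> complex \<Rightarrow> nat \<Rightarrow> complex \<Rightarrow> complex \<Rightarrow> complex \<Rightarrow> complex" where
  "Dcoef p q n a b c =
     (epoch p q b n * epoch p q c n) / (epoch p q (a * q / b) n * epoch p q (a * q / c) n)
     * (a * q / (b * c)) ^ n"

type_synonym triple = "complex \<times> complex \<times> complex"

definition s1 :: "triple \<Rightarrow> triple" where
  "s1 u = (case u of (z, x, k) \<Rightarrow> (x, z, k))"

definition s2 :: "triple \<Rightarrow> triple" where
  "s2 u = (case u of (z, x, k) \<Rightarrow> (z, k, x))"

text \<open>b(u), c(u); r is the fixed square root of pq.\<close>
definition bpar :: "complex \<Rightarrow> complex \<Rightarrow> triple \<Rightarrow> complex" where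
  "bpar r y u = (case u of (z, x, k) \<Rightarrow> r * (z * x / k) * y)"

definition cpar :: "complex \<Rightarrow> complex \<Rightarrow> complex \<Rightarrow> triple \<Rightarrow> complex" where
  "cpar p r y u = (case u of (z, x, k) \<Rightarrow> (r / p) * (z * x / k) * inverse y)"

text \<open>Matrices of size (N+1)x(N+1), indices 0..N, represented as functions.\<close>
definition S1mat :: "complex \<Rightarrow> complex \<Rightarrow> triple \<Rightarrow> nat \<Rightarrow> nat \<Rightarrow> complex" where
  "S1mat p q u = (\<lambda>n m. case u of (z, x, k) \<Rightarrow> Mcoef p q n m (z\<^sup>2) (x\<^sup>2))"

definition S2mat :: "complex \<Rightarrow> complex \<Rightarrow> complex \<Rightarrow> complex \<Rightarrow> triple \<Rightarrow> nat \<Rightarrow> nat \<Rightarrow> complex" where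
  "S2mat p q r y u = (\<lambda>n m. if n = m then
      (case u of (z, x, k) \<Rightarrow> Dcoef p q n (z\<^sup>2) (bpar r y u) (cpar p r y u)) else 0)"

definition mmul :: "nat \<Rightarrow> (nat \<Rightarrow> nat \<Rightarrow> complex) \<Rightarrow> (nat \<Rightarrow> nat \<Rightarrow> complex) \<Rightarrow> nat \<Rightarrow> nat \<Rightarrow> complex" where
  "mmul N A B = (\<lambda>i k. \<Sum>j\<le>N. A i j * B j k)"

definition idmat :: "nat \<Rightarrow> nat \<Rightarrow> complex" where
  "idmat = (\<lambda>i j. if i = j then 1 else 0)"

definition mat_eq :: "nat \<Rightarrow> (nat \<Rightarrow> nat \<Rightarrow> complex) \<Rightarrow> (nat \<Rightarrow> nat \<Rightarrow> complex) \<Rightarrow> bool" where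
  "mat_eq N A B \<longleftrightarrow> (\<forall>i\<le>N. \<forall>j\<le>N. A i j = B i j)"

text \<open>Genericity: all theta functions in denominators of the entries of S1(u), resp. S2(u), are nonzero.\<close>
definition gen_S1 :: "complex \<Rightarrow> complex \<Rightarrow> nat \<Rightarrow> triple \<Rightarrow> bool" where
  "gen_S1 p q N u = (case u of (z, x, k) \<Rightarrow>
     theta (z\<^sup>2) p \<noteq> 0 \<and>
     (\<forall>n\<le>N. \<forall>m\<le>n. epoch p q (q * z\<^sup>2) (n + m) \<noteq> 0 \<and> epoch p q q (n - m) \<noteq> 0))"

definition gen_S2 :: "complex \<Rightarrow> complex \<Rightarrow> complex \<Rightarrow> complex \<Rightarrow> nat \<Rightarrow> triple \<Rightarrow> bool" where
  "gen_S2 p q r y N u = (case u of (z, x, k) \<Rightarrow>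
     (\<forall>n\<le>N. epoch p q (z\<^sup>2 * q / bpar r y u) n \<noteq> 0 \<and>
             epoch p q (z\<^sup>2 * q / cpar p r y u) n \<noteq> 0))"

end

theory Submission
  imports Defs "HOL-Complex_Analysis.Complex_Analysis"
begin


lemma qp_conv:
  assumes "norm (p::complex) < 1"
  shows "convergent_prod (\<lambda>j. 1 - z * p ^ j)"
proof -
  have "summable (\<lambda>i. norm ((1 - z * p ^ i) - 1))"
    using assms by (simp add: norm_mult norm_power summable_mult)
  then show ?thesis
    by (intro abs_convergent_prod_imp_convergent_prod summable_imp_abs_convergent_prod)
qed

lemma qp_has:
  assumes "norm (p::complex) < 1"
  shows "(\<lambda>j. 1 - z * p ^ j) has_prod qpoch_inf z p"
  unfolding qpoch_inf_def using qp_conv[OF assms] convergent_prod_has_prod by blast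

lemma qp_shift:
  assumes "norm (p::complex) < 1"
  shows "qpoch_inf z p = (1 - z) * qpoch_inf (z * p) p"
proof -
  have "(\<lambda>n. 1 - z * p ^ Suc n) has_prod qpoch_inf (z*p) p"
    using qp_has[OF assms, of "z*p"] by (simp add: mult.assoc mult.commute mult.left_commute)
  then have "(\<lambda>n. 1 - z * p ^ n) has_prod (qpoch_inf (z*p) p * (1 - z * p^0))"
    by (rule has_prod_Suc_imp[where f="\<lambda>n. 1 - z * p ^ n"])
  then show ?thesis using has_prod_unique2[OF qp_has[OF assms, of z]] by (simp add: mult.commute)
qed

lemma qp_zero_iff:
  assumes "norm (p::complex) < 1"
  shows "qpoch_inf z p = 0 \<longleftrightarrow> (\<exists>j. z * p ^ j = 1)"
  using has_prod_eq_0_iff[OF qp_has[OF assms, of z]] by (auto simp: eq_commute[of 0] image_iff)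

lemma th_1: "norm p < 1 \<Longrightarrow> theta 1 p = 0"
  unfolding theta_def using qp_zero_iff[of p 1] by (auto intro: exI[of _ 0])

lemma th_p:
  assumes "norm (p::complex) < 1" "z \<noteq> 0" "p \<noteq> 0"
  shows "theta (p * z) p * z = - theta z p"
proof -
  have a: "qpoch_inf z p = (1 - z) * qpoch_inf (z * p) p" by (rule qp_shift[OF assms(1)])
  have b: "qpoch_inf (1/z) p = (1 - 1/z) * qpoch_inf (p / z) p"
    using qp_shift[OF assms(1), of "1/z"] by simp
  have c: "p / (p * z) = 1 / z" using assms by simp
  have "theta (p * z) p * z = qpoch_inf (z*p) p * ((1 - 1/z) * z) * qpoch_inf (p / z) p"
    unfolding theta_def c b by (simp add: mult.commute mult.left_commute)
  also have "(1 - 1/z) * z = - (1 - z)" using assms by (simp add: field_simps)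
  finally show ?thesis unfolding theta_def a by (simp add: algebra_simps)
qed

lemma th_inv:
  assumes "norm (p::complex) < 1" "z \<noteq> 0" "p \<noteq> 0"
  shows "theta (1 / z) p * z = - theta z p"
proof -
  have a: "qpoch_inf z p = (1 - z) * qpoch_inf (z * p) p" by (rule qp_shift[OF assms(1)])
  have b: "qpoch_inf (1/z) p = (1 - 1/z) * qpoch_inf (p / z) p"
    using qp_shift[OF assms(1), of "1/z"] by simp
  have c: "p / (1 / z) = z * p" using assms by simp
  have "theta (1 / z) p * z = qpoch_inf (z*p) p * ((1 - 1/z) * z) * qpoch_inf (p / z) p"
    unfolding theta_def c b by (simp add: mult.commute mult.left_commute)
  also have "(1 - 1/z) * z = - (1 - z)" using assms by (simp add: field_simps)
  finally show ?thesis unfolding theta_def a by (simp add: algebra_simps)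
qed

lemma th_nonzero:
  assumes "norm (p::complex) < 1" "z \<noteq> 0" "\<And>k::int. z \<noteq> p powi k" and p0: "p \<noteq> 0"
  shows "theta z p \<noteq> 0"
proof -
  have "qpoch_inf z p \<noteq> 0"
  proof
    assume "qpoch_inf z p = 0"
    then obtain j where "z * p ^ j = 1" using qp_zero_iff[OF assms(1)] by auto
    then have "z = inverse (p ^ j)" using p0 by (simp add: field_simps)
    then have "z = p powi (- int j)" by (simp add: power_int_minus)
    then show False using assms(3) by blast
  qed
  moreover have "qpoch_inf (p/z) p \<noteq> 0"
  proof
    assume "qpoch_inf (p/z) p = 0"
    then obtain j where "p / z * p ^ j = 1" using qp_zero_iff[OF assms(1)] by auto
    then have "z = p ^ (Suc j)" using p0 assms(2)
      by (simp add: field_simps)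
    then have "z = p powi (int (Suc j))" by (simp only: power_int_of_nat)
    then show False using assms(3) by blast
  qed
  ultimately show ?thesis unfolding theta_def by simp
qed

lemma th_zero:
  assumes "norm (p::complex) < 1" "z \<noteq> 0" "p \<noteq> 0" "theta z p = 0"
  shows "\<exists>k::int. z = p powi k"
  using th_nonzero[OF assms(1,2) _ assms(3)] assms(4) by blast

lemma qp_holo:
  assumes "norm (p::complex) < 1"
  shows "(\<lambda>z. qpoch_inf z p) holomorphic_on UNIV"
proof (rule holomorphic_uniform_sequence[where f="\<lambda>n z. \<Prod>j<n. 1 - z * p ^ j"])
  fix n show "(\<lambda>z. \<Prod>j<n. 1 - z * p ^ j) holomorphic_on UNIV"
    by (intro holomorphic_intros)
next
  fix x :: complex
  define R where "R = norm x + 1"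
  have R: "R > 0" unfolding R_def by (simp add: add_nonneg_pos)
  have uc: "uniformly_convergent_on (cball 0 R) (\<lambda>N z. \<Prod>j<N. 1 - z * p ^ j)"
  proof (rule uniformly_convergent_on_prod')
    show "uniformly_convergent_on (cball 0 R) (\<lambda>N z. \<Sum>n<N. norm (1 - z * p ^ n - 1))"
    proof (rule Weierstrass_m_test'[where M="\<lambda>n. R * norm p ^ n"])
      fix n and z :: complex assume "z \<in> cball 0 R"
      then have "norm z \<le> R" by auto
      then show "norm (norm (1 - z * p ^ n - 1)) \<le> R * norm p ^ n"
        by (simp add: norm_mult norm_power mult_right_mono)
    next
      show "summable (\<lambda>n. R * norm p ^ n)" using assms by (simp add: summable_mult)
    qed
  next
    fix n show "continuous_on (cball 0 R) (\<lambda>z. 1 - z * p ^ n)"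
      by (intro continuous_intros)
  next
    show "compact (cball (0::complex) R)" by simp
  qed
  then obtain g where g: "uniform_limit (cball 0 R) (\<lambda>N z. \<Prod>j<N. 1 - z * p ^ j) g sequentially"
    unfolding uniformly_convergent_on_def by blast
  have geq: "g z = qpoch_inf z p" if "z \<in> cball 0 R" for z
  proof -
    have "(\<lambda>n. \<Prod>j<n. 1 - z * p ^ j) \<longlonglongrightarrow> g z"
      using tendsto_uniform_limitI[OF g that] .
    then have "(\<lambda>n. \<Prod>j<Suc n. 1 - z * p ^ j) \<longlonglongrightarrow> g z"
      by (rule LIMSEQ_Suc)
    moreover have "(\<lambda>n. \<Prod>j<Suc n. 1 - z * p ^ j) \<longlonglongrightarrow> qpoch_inf z p"
      using convergent_prod_LIMSEQ[OF qp_conv[OF assms, of z]] unfolding lessThan_Suc_atMost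
      by (simp add: qpoch_inf_def)
    ultimately show "g z = qpoch_inf z p" using tendsto_unique by force
  qed
  have ul: "uniform_limit (cball 0 R) (\<lambda>N z. \<Prod>j<N. 1 - z * p ^ j) (\<lambda>z. qpoch_inf z p) sequentially"
  proof -
    have "uniform_limit (cball 0 R) (\<lambda>N z. \<Prod>j<N. 1 - z * p ^ j) g sequentially =
          uniform_limit (cball 0 R) (\<lambda>N z. \<Prod>j<N. 1 - z * p ^ j) (\<lambda>z. qpoch_inf z p) sequentially"
      by (rule uniform_limit_cong) (auto simp: geq)
    then show ?thesis using g by simp
  qed
  then have "uniform_limit (cball x 1) (\<lambda>N z. \<Prod>j<N. 1 - z * p ^ j) (\<lambda>z. qpoch_inf z p) sequentially"
    by (rule uniform_limit_on_subset) (simp add: cball_subset_cball_iff R_def)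
  then show "\<exists>d>0. cball x d \<subseteq> UNIV \<and> uniform_limit (cball x d) (\<lambda>N z. \<Prod>j<N. 1 - z * p ^ j) (\<lambda>z. qpoch_inf z p) sequentially"
    by (intro exI[of _ 1]) auto
qed auto

lemma th_holo:
  assumes "norm (p::complex) < 1"
  shows "(\<lambda>z. theta z p) holomorphic_on (- {0})"
proof -
  have h: "(\<lambda>z. qpoch_inf z p) holomorphic_on UNIV" by (rule qp_holo[OF assms])
  have "(\<lambda>z. qpoch_inf z p * qpoch_inf (p / z) p) holomorphic_on (- {0})"
    by (intro holomorphic_intros holomorphic_on_compose_gen[OF _ h, unfolded o_def]) auto
  then show ?thesis unfolding theta_def .
qed


locale thp =
  fixes p :: complex
  assumes p0: "p \<noteq> 0" and p1: "norm p < 1"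
begin

abbreviation th where "th z \<equiv> theta z p"

lemma th1: "th 1 = 0" using th_1[OF p1] .

lemma thp: "z \<noteq> 0 \<Longrightarrow> th (p * z) * z = - th z" using th_p[OF p1 _ p0] .
lemma thinv: "z \<noteq> 0 \<Longrightarrow> th (1/z) * z = - th z" using th_inv[OF p1 _ p0] .

lemma thdivp: "z \<noteq> 0 \<Longrightarrow> th (z / p) = - (z / p) * th z"
proof -
  assume z: "z \<noteq> 0"
  have "th (p * (z/p)) * (z/p) = - th (z/p)" using thp[of "z/p"] z p0 by simp
  then show ?thesis using p0 by (simp add: field_simps)
qed

lemma thinv': "z \<noteq> 0 \<Longrightarrow> th (inverse z) = - th z / z"
proof -
  assume z: "z \<noteq> 0"
  have "th (1/z) * z = - th z" by (rule thinv[OF z])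
  then have "th (1/z) = - th z / z" using z by (metis nonzero_mult_div_cancel_right)
  then show ?thesis by (simp add: inverse_eq_divide)
qed

lemma th_holo': "(\<lambda>z. th z) holomorphic_on (- {0})" using th_holo[OF p1] .

lemma th_cont: "z \<noteq> 0 \<Longrightarrow> isCont (\<lambda>z. th z) z"
proof -
  assume z: "z \<noteq> 0"
  have "continuous_on (-{0}) (\<lambda>z. th z)" by (rule holomorphic_on_imp_continuous_on[OF th_holo'])
  moreover have "open (-{0::complex})" by auto
  ultimately show ?thesis using z continuous_on_eq_continuous_at by blast
qed

definition D where "D z = deriv (\<lambda>z. th z) z"

lemma th_deriv: "z \<noteq> 0 \<Longrightarrow> ((\<lambda>z. th z) has_field_derivative D z) (at z)"
  unfolding D_def
  by (rule holomorphic_derivI[OF th_holo']) auto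

lemma qp_p_nz: "qpoch_inf p p \<noteq> 0"
proof
  assume "qpoch_inf p p = 0"
  then obtain j where "p * p ^ j = 1" using qp_zero_iff[OF p1] by auto
  then have "norm (p ^ Suc j) = 1" by simp
  moreover have "norm (p ^ Suc j) < 1"
    unfolding norm_power using p1 p0 by (intro power_Suc_less_one) auto
  ultimately show False by simp
qed

lemma D1: "D 1 \<noteq> 0"
proof -
  define R where "R z = qpoch_inf (z * p) p * qpoch_inf (p / z) p" for z
  have eq: "th z = (1 - z) * R z" for z
    unfolding theta_def R_def using qp_shift[OF p1, of z] by simp
  have hR: "(\<lambda>z. R z) holomorphic_on (- {0})"
    unfolding R_def
    by (intro holomorphic_intros holomorphic_on_compose_gen[OF _ qp_holo[OF p1], unfolded o_def]) auto
  have dR: "(R has_field_derivative deriv R 1) (at 1)"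
    by (rule holomorphic_derivI[OF hR]) auto
  have d1: "((\<lambda>z. 1 - z) has_field_derivative (-1)) (at (1::complex))"
    by (auto intro!: derivative_eq_intros)
  have "((\<lambda>z. (1 - z) * R z) has_field_derivative ((-1) * R 1 + deriv R 1 * (1 - 1))) (at 1)"
    using DERIV_mult[OF d1 dR] by simp
  then have "((\<lambda>z. th z) has_field_derivative (- R 1)) (at 1)" unfolding eq by simp
  then have "D 1 = - R 1" using th_deriv[of 1] DERIV_unique by auto
  moreover have "R 1 \<noteq> 0" unfolding R_def using qp_p_nz by simp
  ultimately show ?thesis by simp
qed

lemma Dp:
  assumes z: "z \<noteq> 0" and tz: "th z = 0"
  shows "th (p * z) = 0" "p * z * D (p * z) = - D z"
proof -
  show "th (p * z) = 0" using thp[OF z] tz z by simp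
  have dg: "((\<lambda>w. p * w) has_field_derivative p) (at z)"
    using DERIV_cmult[OF DERIV_ident, of p] by simp
  have pz: "p * z \<noteq> 0" using z p0 by simp
  have d1: "((\<lambda>w. th (p * w)) has_field_derivative D (p * z) * p) (at z)"
    using DERIV_chain2[OF th_deriv[OF pz] dg] .
  have d2: "((\<lambda>w. th (p * w) * w) has_field_derivative (D (p * z) * p * z + 1 * th (p * z))) (at z)"
    using DERIV_mult[OF d1 DERIV_ident] by simp
  have d3: "((\<lambda>w. - th w) has_field_derivative (D (p * z) * p * z + 1 * th (p * z))) (at z)"
    by (rule has_field_derivative_transform_within_open[OF d2, of "-{0}"]) (use z thp in auto)
  have d4: "((\<lambda>w. - th w) has_field_derivative (- D z)) (at z)"
    using DERIV_minus[OF th_deriv[OF z]] .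
  have "D (p * z) * p * z + 1 * th (p * z) = - D z" using DERIV_unique[OF d3 d4] .
  then show "p * z * D (p * z) = - D z" using thp[OF z] tz z by (simp add: algebra_simps)
qed

lemma zeros_pow: "th (p ^ n) = 0 \<and> D (p ^ n) \<noteq> 0 \<and> th (p powi (- int n)) = 0 \<and> D (p powi (- int n)) \<noteq> 0"
proof (induction n)
  case 0 then show ?case using th1 D1 by simp
next
  case (Suc n)
  have pn: "p ^ n \<noteq> 0" using p0 by simp
  have a: "th (p ^ Suc n) = 0" "p * p ^ n * D (p ^ Suc n) = - D (p ^ n)"
    using Dp[OF pn] Suc by auto
  have b: "D (p ^ Suc n) \<noteq> 0" using a(2) Suc by auto
  define w where "w = p powi (- int (Suc n))"
  have w0: "w \<noteq> 0" unfolding w_def using p0 by simp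
  have pw: "p * w = p powi (- int n)" unfolding w_def using p0
    by (simp only: power_int_minus power_int_of_nat) (simp add: field_simps)
  have c: "th w = 0"
  proof (rule ccontr)
    assume "th w \<noteq> 0"
    then have "th (p * w) \<noteq> 0" using thp[OF w0] w0 by auto
    then show False using Suc pw by simp
  qed
  have d: "p * w * D (p * w) = - D w" using Dp[OF w0 c] by simp
  then have "D w \<noteq> 0" using Suc pw w0 p0 by auto
  then show ?case using a b c w_def by simp
qed

lemma zeros_int: "th (p powi k) = 0 \<and> D (p powi k) \<noteq> 0"
proof (cases "k \<ge> 0")
  case True
  then obtain n where "k = int n" by (intro that[of "nat k"]) simp
  then show ?thesis using zeros_pow[of n] by (simp add: power_int_of_nat)
next
  case False
  then obtain n where "k = - int n" by (intro that[of "nat (-k)"]) simp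
  then show ?thesis using zeros_pow[of n] by simp
qed

lemma th_zero_iff: "z \<noteq> 0 \<Longrightarrow> th z = 0 \<longleftrightarrow> (\<exists>k::int. z = p powi k)"
  using th_zero[OF p1 _ p0] zeros_int by auto

lemma D_nz: "z \<noteq> 0 \<Longrightarrow> th z = 0 \<Longrightarrow> D z \<noteq> 0"
  using th_zero_iff zeros_int by auto

lemma isol_zero:
  assumes hF: "F holomorphic_on (-{0})" and x: "x \<noteq> 0" and Fx: "F x = 0" and dF: "deriv F x \<noteq> 0"
  shows "\<exists>e>0. ball x e \<subseteq> -{0} \<and> (\<forall>y\<in>ball x e. y \<noteq> x \<longrightarrow> F y \<noteq> 0)"
proof -
  define F1 where "F1 = (\<lambda>y. if y = x then deriv F x else (F y - F x) / (y - x))"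
  have h1: "F1 holomorphic_on (-{0})" unfolding F1_def
    by (rule pole_lemma_open[OF hF]) auto
  then have "continuous_on (-{0}) F1" by (rule holomorphic_on_imp_continuous_on)
  then have c1: "isCont F1 x" using x by (simp add: continuous_on_eq_continuous_at open_Compl)
  have "F1 x \<noteq> 0" using dF by (simp add: F1_def)
  then obtain e1 where e1: "e1 > 0" "\<And>y. dist y x < e1 \<Longrightarrow> F1 y \<noteq> 0"
    using continuous_at_avoid[OF c1] by (metis dist_commute)
  define e where "e = min e1 (norm x)"
  have e: "e > 0" using e1 x by (simp add: e_def)
  have sub: "ball x e \<subseteq> -{0}"
  proof
    fix y assume "y \<in> ball x e"
    then have "dist x y < norm x" by (simp add: e_def)
    then show "y \<in> -{0}" by (auto simp: dist_norm)
  qed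
  have "F y \<noteq> 0" if "y \<in> ball x e" "y \<noteq> x" for y
  proof -
    have "dist y x < e1" using that by (simp add: e_def dist_commute)
    then have "F1 y \<noteq> 0" using e1 by blast
    then have "(F y - F x) / (y - x) \<noteq> 0" using that by (simp add: F1_def)
    then show ?thesis using Fx by simp
  qed
  then show ?thesis using e sub by blast
qed

lemma liou_quot:
  fixes E F m :: "complex \<Rightarrow> complex"
  assumes hE: "E holomorphic_on (-{0})" and hF: "F holomorphic_on (-{0})"
    and perE: "\<And>w. w \<noteq> 0 \<Longrightarrow> E (p * w) = E w * m w"
    and perF: "\<And>w. w \<noteq> 0 \<Longrightarrow> F (p * w) = F w * m w"
    and m0: "\<And>w. w \<noteq> 0 \<Longrightarrow> m w \<noteq> 0"
    and zer: "\<And>w. w \<noteq> 0 \<Longrightarrow> F w = 0 \<Longrightarrow> E w = 0 \<and> deriv F w \<noteq> 0"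
    and w1: "w1 \<noteq> 0" "F w1 \<noteq> 0" "E w1 = 0"
    and w: "w \<noteq> 0"
  shows "E w = 0"
proof -
  define G where "G y = (if F y = 0 then deriv E y / deriv F y else E y / F y)" for y
  have oS: "open (-{0::complex})" by (simp add: open_Compl)
  have anal: "G analytic_on (-{0})"
    unfolding analytic_on_def
  proof
    fix x :: complex assume "x \<in> -{0}"
    then have x: "x \<noteq> 0" by simp
    show "\<exists>e>0. G holomorphic_on ball x e"
    proof (cases "F x = 0")
      case False
      have "continuous_on (-{0}) F" by (rule holomorphic_on_imp_continuous_on[OF hF])
      then have "isCont F x" using x by (simp add: continuous_on_eq_continuous_at open_Compl)
      then obtain e1 where e1: "e1 > 0" "\<And>y. dist y x < e1 \<Longrightarrow> F y \<noteq> 0"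
        using continuous_at_avoid[of x F] False by (metis dist_commute)
      define e where "e = min e1 (norm x)"
      have e: "e > 0" using e1 x by (simp add: e_def)
      have sub: "ball x e \<subseteq> -{0}"
      proof
        fix y assume "y \<in> ball x e"
        then have "dist x y < norm x" by (simp add: e_def)
        then show "y \<in> -{0}" by (auto simp: dist_norm)
      qed
      have nz: "F y \<noteq> 0" if "y \<in> ball x e" for y
        using e1(2)[of y] that by (simp add: e_def dist_commute)
      have "(\<lambda>y. E y / F y) holomorphic_on ball x e"
        by (intro holomorphic_on_divide holomorphic_on_subset[OF hE sub] holomorphic_on_subset[OF hF sub] nz)
      then have "G holomorphic_on ball x e"
        by (rule holomorphic_transform) (simp add: G_def nz)
      then show ?thesis using e by blast
    next
      case True
      have Ex: "E x = 0" and dF: "deriv F x \<noteq> 0" using zer[OF x True] by auto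
      define F1 where "F1 = (\<lambda>y. if y = x then deriv F x else (F y - F x) / (y - x))"
      define E1 where "E1 = (\<lambda>y. if y = x then deriv E x else (E y - E x) / (y - x))"
      have hF1: "F1 holomorphic_on (-{0})" unfolding F1_def by (rule pole_lemma_open[OF hF oS])
      have hE1: "E1 holomorphic_on (-{0})" unfolding E1_def by (rule pole_lemma_open[OF hE oS])
      have "continuous_on (-{0}) F1" by (rule holomorphic_on_imp_continuous_on[OF hF1])
      then have c1: "isCont F1 x" using x by (simp add: continuous_on_eq_continuous_at open_Compl)
      have "F1 x \<noteq> 0" using dF by (simp add: F1_def)
      then obtain e1 where e1: "e1 > 0" "\<And>y. dist y x < e1 \<Longrightarrow> F1 y \<noteq> 0"
        using continuous_at_avoid[OF c1] by (metis dist_commute)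
      define e where "e = min e1 (norm x)"
      have e: "e > 0" using e1 x by (simp add: e_def)
      have sub: "ball x e \<subseteq> -{0}"
      proof
        fix y assume "y \<in> ball x e"
        then have "dist x y < norm x" by (simp add: e_def)
        then show "y \<in> -{0}" by (auto simp: dist_norm)
      qed
      have nz: "F1 y \<noteq> 0" if "y \<in> ball x e" for y
        using e1(2)[of y] that by (simp add: e_def dist_commute)
      have eqG: "E1 y / F1 y = G y" if "y \<in> ball x e" for y
      proof (cases "y = x")
        case True then show ?thesis using \<open>F x = 0\<close> by (simp add: G_def E1_def F1_def)
      next
        case False
        have "F y = F1 y * (y - x)" using False True by (simp add: F1_def)
        then have Fy: "F y \<noteq> 0" using nz[OF that] False by simp
        have "E y = E1 y * (y - x)" using False Ex by (simp add: E1_def)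
        then show ?thesis using Fy \<open>F y = F1 y * (y - x)\<close> False by (simp add: G_def)
      qed
      have "(\<lambda>y. E1 y / F1 y) holomorphic_on ball x e"
        by (intro holomorphic_on_divide holomorphic_on_subset[OF hE1 sub] holomorphic_on_subset[OF hF1 sub] nz)
      then have "G holomorphic_on ball x e"
        by (rule holomorphic_transform) (simp add: eqG)
      then show ?thesis using e by blast
    qed
  qed
  then have hG: "G holomorphic_on (-{0})" by (simp add: analytic_imp_holomorphic)
  then have cG: "continuous_on (-{0}) G" by (rule holomorphic_on_imp_continuous_on)
  define K where "K = {y::complex. norm p \<le> norm y \<and> norm y \<le> 1}"
  have Ksub: "K \<subseteq> -{0}" using p0 by (auto simp: K_def)
  have "compact K"
  proof -
    have "closed K" unfolding K_def
      by (intro closed_Collect_conj closed_Collect_le continuous_intros)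
    moreover have "bounded K" unfolding K_def bounded_iff by auto
    ultimately show ?thesis by (simp add: compact_eq_bounded_closed)
  qed
  then have "compact (G ` K)" by (rule compact_continuous_image[OF continuous_on_subset[OF cG Ksub]])
  then obtain M where M: "\<And>y. y \<in> K \<Longrightarrow> norm (G y) \<le> M"
    using compact_imp_bounded[of "G ` K"] unfolding bounded_iff by blast
  have perG: "G (p * y) = G y" if "y \<noteq> 0" "F y \<noteq> 0" for y
    using that perE perF m0 by (simp add: G_def)
  have np: "norm p > 0" "norm p < 1" using p0 p1 by auto
  have up: "norm (G y) \<le> M" if "y \<noteq> 0" "F y \<noteq> 0" "norm p \<le> norm y" "norm y \<le> 1 / norm p ^ n" for n y
    using that
  proof (induction n arbitrary: y)
    case 0 then show ?case using M[of y] by (simp add: K_def)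
  next
    case (Suc n)
    show ?case
    proof (cases "norm y \<le> 1")
      case True then show ?thesis using M[of y] Suc by (simp add: K_def)
    next
      case False
      have a: "p * y \<noteq> 0" "F (p * y) \<noteq> 0" using Suc.prems perF m0 p0 by auto
      have b: "norm p \<le> norm (p * y)" using False np by (simp add: norm_mult)
      have "norm (p * y) = norm p * norm y" by (simp add: norm_mult)
      also have "\<dots> \<le> norm p * (1 / norm p ^ Suc n)"
        using Suc.prems(4) np by (intro mult_left_mono) auto
      also have "\<dots> = 1 / norm p ^ n" using np by (simp add: field_simps)
      finally have c: "norm (p * y) \<le> 1 / norm p ^ n" .
      have "norm (G (p * y)) \<le> M" using Suc.IH[OF a b c] .
      then show ?thesis using perG Suc.prems by simp
    qed
  qed
  have down: "norm (G y) \<le> M" if "y \<noteq> 0" "F y \<noteq> 0" "norm p ^ Suc n \<le> norm y" "norm y \<le> 1" for n y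
    using that
  proof (induction n arbitrary: y)
    case 0 then show ?case using M[of y] by (simp add: K_def)
  next
    case (Suc n)
    show ?case
    proof (cases "norm p \<le> norm y")
      case True then show ?thesis using M[of y] Suc by (simp add: K_def)
    next
      case False
      define y' where "y' = y / p"
      have yy: "y = p * y'" using p0 by (simp add: y'_def)
      have a: "y' \<noteq> 0" using Suc.prems p0 by (simp add: y'_def)
      have a2: "F y' \<noteq> 0" using Suc.prems perF[OF a] yy by auto
      have ny: "norm y' = norm y / norm p" by (simp add: y'_def norm_divide)
      have b: "norm p ^ Suc n \<le> norm y'"
        using Suc.prems(3) np unfolding ny by (simp add: field_simps)
      have c: "norm y' \<le> 1" using False np unfolding ny by (simp add: field_simps)
      have "norm (G y') \<le> M" using Suc.IH[OF a a2 b c] .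
      then show ?thesis using perG[OF a a2] yy by simp
    qed
  qed
  have bnd1: "norm (G y) \<le> M" if y0: "y \<noteq> 0" and Fy: "F y \<noteq> 0" for y
  proof (cases "norm p \<le> norm y")
    case True
    have "1 < 1 / norm p" using np by (simp add: field_simps)
    then obtain n where "norm y < (1 / norm p) ^ n"
      using real_arch_pow[of "1 / norm p" "norm y"] by blast
    then have "norm y \<le> 1 / norm p ^ n" by (simp add: power_one_over)
    then show ?thesis using up y0 Fy True by blast
  next
    case False
    obtain n where n: "norm p ^ n < norm y"
      using real_arch_pow_inv[of "norm y" "norm p"] np y0 by auto
    have "n \<noteq> 0" using n False np by (cases n) auto
    then obtain n' where "n = Suc n'" by (cases n) auto
    then show ?thesis using down[of y n'] n False np y0 Fy by auto
  qed
  have bnd: "norm (G y) \<le> M" if y: "y \<noteq> 0" for y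
  proof (cases "F y = 0")
    case False then show ?thesis using bnd1 y by blast
  next
    case True
    obtain e where e: "e > 0" "ball y e \<subseteq> -{0}" "\<And>z. z \<in> ball y e \<Longrightarrow> z \<noteq> y \<Longrightarrow> F z \<noteq> 0"
      using isol_zero[OF hF y True] zer[OF y True] by blast
    have lim: "(G \<longlongrightarrow> G y) (at y)"
      using cG y by (simp add: continuous_on_eq_continuous_at open_Compl isCont_def)
    have ev: "eventually (\<lambda>z. norm (G z) \<le> M) (at y)"
      unfolding eventually_at
    proof (intro exI[of _ e] conjI ballI impI)
      show "e > 0" using e by simp
      fix z assume "z \<noteq> y \<and> dist z y < e"
      then have "z \<in> ball y e" "z \<noteq> y" by (auto simp: dist_commute)
      then have "z \<noteq> 0" "F z \<noteq> 0" using e by auto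
      then show "norm (G z) \<le> M" using bnd1 by blast
    qed
    show ?thesis by (rule Lim_norm_ubound[OF _ lim ev]) simp
  qed
  have hexp: "(\<lambda>t. G (exp t)) holomorphic_on UNIV"
    by (rule holomorphic_on_compose_gen[OF _ hG, unfolded o_def]) (auto intro: holomorphic_intros)
  have "bounded (range (\<lambda>t. G (exp t)))"
    unfolding bounded_iff using bnd by (intro exI[of _ M]) auto
  then have "(\<lambda>t. G (exp t)) constant_on UNIV" by (rule Liouville_theorem[OF hexp])
  then have "G (exp (Ln w)) = G (exp (Ln w1))" unfolding constant_on_def by auto
  then have "G w = G w1" using w w1 by simp
  also have "G w1 = 0" using w1 by (simp add: G_def)
  finally have Gw: "G w = 0" .
  show ?thesis
  proof (cases "F w = 0")
    case True then show ?thesis using zer[OF w] by blast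
  next
    case False then show ?thesis using Gw by (simp add: G_def)
  qed
qed

end


context thp begin

definition Ph where "Ph c X w = th (c * w) * th (c / (X * w))"

lemma Ph_per:
  assumes "c \<noteq> 0" "X \<noteq> 0" "w \<noteq> 0"
  shows "Ph c X (p * w) = Ph c X w * (1 / (X * p * w\<^sup>2))"
proof -
  have a: "th (c * (p * w)) = - th (c * w) / (c * w)"
  proof -
    have "th (p * (c * w)) * (c * w) = - th (c * w)" using thp[of "c*w"] assms by simp
    then have e: "th (c * (p * w)) * (c * w) = - th (c * w)" by (simp add: mult.left_commute)
    have cw: "c * w \<noteq> 0" using assms by simp
    show ?thesis using e cw by (simp add: field_simps)
  qed
  have b: "th (c / (X * (p * w))) = - (c / (X * w) / p) * th (c / (X * w))"
  proof -
    have eq: "c / (X * (p * w)) = (c / (X * w)) / p" by (simp add: field_simps)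
    have nz: "c / (X * w) \<noteq> 0" using assms by simp
    show ?thesis unfolding eq by (rule thdivp[OF nz])
  qed
  show ?thesis unfolding Ph_def a b using assms p0 by (simp add: field_simps power2_eq_square)
qed

lemma per_zero:
  fixes f m :: "complex \<Rightarrow> complex"
  assumes per: "\<And>w. w \<noteq> 0 \<Longrightarrow> f (p * w) = f w * m w" and m0: "\<And>w. w \<noteq> 0 \<Longrightarrow> m w \<noteq> 0"
    and v: "v \<noteq> 0"
  shows "f (p powi k * v) = 0 \<longleftrightarrow> f v = 0"
proof -
  have step: "f (p * w) = 0 \<longleftrightarrow> f w = 0" if "w \<noteq> 0" for w
    using per[OF that] m0[OF that] by simp
  have pos: "f (p ^ n * v) = 0 \<longleftrightarrow> f v = 0" for n
  proof (induction n)
    case 0 then show ?case by simp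
  next
    case (Suc n)
    have "p ^ n * v \<noteq> 0" using p0 v by simp
    then show ?case using step[of "p ^ n * v"] Suc by (simp add: mult.assoc)
  qed
  have neg: "f (p powi (- int n) * v) = 0 \<longleftrightarrow> f v = 0" for n
  proof -
    define u where "u = p powi (- int n) * v"
    have u0: "u \<noteq> 0" using p0 v by (simp add: u_def)
    have "p ^ n * u = v" using p0 by (simp add: u_def power_int_minus field_simps)
    then have "f v = 0 \<longleftrightarrow> f u = 0"
    proof -
      have "f (p ^ n * u) = 0 \<longleftrightarrow> f u = 0"
      proof (induction n)
        case 0 then show ?case by simp
      next
        case (Suc n)
        have "p ^ n * u \<noteq> 0" using p0 u0 by simp
        then show ?case using step[of "p ^ n * u"] Suc by (simp add: mult.assoc)
      qed
      then show ?thesis using \<open>p ^ n * u = v\<close> by simp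
    qed
    then show ?thesis by (simp add: u_def)
  qed
  show ?thesis
  proof (cases "k \<ge> 0")
    case True
    then obtain n where "k = int n" by (intro that[of "nat k"]) simp
    then show ?thesis using pos[of n] by (simp add: power_int_of_nat)
  next
    case False
    then obtain n where "k = - int n" by (intro that[of "nat (-k)"]) simp
    then show ?thesis using neg[of n] by simp
  qed
qed

lemma th_swap: "a \<noteq> 0 \<Longrightarrow> b \<noteq> 0 \<Longrightarrow> th (b / a) = - (b / a) * th (a / b)"
proof -
  assume a: "a \<noteq> 0" and b: "b \<noteq> 0"
  have "th (1 / (a / b)) * (a / b) = - th (a / b)" using thinv[of "a/b"] a b by simp
  then have "th (b / a) * (a / b) = - th (a / b)" by simp
  then show ?thesis using a b by (simp add: field_simps)
qed

lemma Ph_holo: "c \<noteq> 0 \<Longrightarrow> X \<noteq> 0 \<Longrightarrow> Ph c X holomorphic_on (-{0})"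
proof -
  assume c: "c \<noteq> 0" and X: "X \<noteq> 0"
  have h1: "(\<lambda>w. th (c * w)) holomorphic_on (-{0})"
    by (rule holomorphic_on_compose_gen[OF _ th_holo', unfolded o_def]) (use c in \<open>auto intro!: holomorphic_intros\<close>)
  have h2: "(\<lambda>w. th (c / (X * w))) holomorphic_on (-{0})"
    by (rule holomorphic_on_compose_gen[OF _ th_holo', unfolded o_def]) (use c X in \<open>auto intro!: holomorphic_intros\<close>)
  have "(\<lambda>w. th (c * w) * th (c / (X * w))) holomorphic_on (-{0})"
    by (rule holomorphic_on_mult[OF h1 h2])
  then show ?thesis unfolding Ph_def[abs_def] .
qed

definition AFe where
  "AFe c1 c2 c3 X w = Ph c1 X w * (th (c2 * c3 / X) * th (c2 / c3))
     - Ph c2 X w * (th (c1 * c3 / X) * th (c1 / c3))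
     + (c2 / c3) * Ph c3 X w * (th (c1 * c2 / X) * th (c1 / c2))"

lemma Ph_deriv:
  assumes c: "c \<noteq> 0" and X: "X \<noteq> 0" and w: "w \<noteq> 0"
  shows "deriv (Ph c X) w = D (c * w) * c * th (c / (X * w)) + th (c * w) * (D (c / (X * w)) * (- c / (X * w\<^sup>2)))"
proof -
  have cw: "c * w \<noteq> 0" and cxw: "c / (X * w) \<noteq> 0" using c X w by auto
  have d1: "((\<lambda>w. c * w) has_field_derivative c) (at w)"
    using DERIV_cmult[OF DERIV_ident, of c] by simp
  have d2: "((\<lambda>w. c / (X * w)) has_field_derivative (- c / (X * w\<^sup>2))) (at w)"
    using X w by (auto intro!: derivative_eq_intros simp: power2_eq_square field_simps)
  have e1: "((\<lambda>w. th (c * w)) has_field_derivative D (c * w) * c) (at w)"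
    using DERIV_chain2[OF th_deriv[OF cw] d1] .
  have e2: "((\<lambda>w. th (c / (X * w))) has_field_derivative D (c / (X * w)) * (- c / (X * w\<^sup>2))) (at w)"
    using DERIV_chain2[OF th_deriv[OF cxw] d2] .
  have "((\<lambda>w. th (c * w) * th (c / (X * w))) has_field_derivative
        D (c * w) * c * th (c / (X * w)) + D (c / (X * w)) * (- c / (X * w\<^sup>2)) * th (c * w)) (at w)"
    using DERIV_mult[OF e1 e2] .
  then have "(Ph c X has_field_derivative
        D (c * w) * c * th (c / (X * w)) + th (c * w) * (D (c / (X * w)) * (- c / (X * w\<^sup>2)))) (at w)"
    unfolding Ph_def[abs_def] by (simp add: mult.commute)
  then show ?thesis by (rule DERIV_imp_deriv)
qed

lemma AF_generic:
  assumes c1: "c1 \<noteq> 0" and c2: "c2 \<noteq> 0" and c3: "c3 \<noteq> 0" and X: "X \<noteq> 0"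
    and G1: "\<And>k. c1\<^sup>2 \<noteq> X * p powi k" and G2: "th (c1 / c2) \<noteq> 0" "th (c1 * c2 / X) \<noteq> 0"
    and w: "w \<noteq> 0"
  shows "AFe c1 c2 c3 X w = 0"
proof -
  define m where "m w = 1 / (X * p * w\<^sup>2)" for w
  have m0: "m w \<noteq> 0" if "w \<noteq> 0" for w using that X p0 by (simp add: m_def)
  have perF: "Ph c1 X (p * w) = Ph c1 X w * m w" if "w \<noteq> 0" for w
    using Ph_per[OF c1 X that] by (simp add: m_def)
  have perE: "AFe c1 c2 c3 X (p * w) = AFe c1 c2 c3 X w * m w" if "w \<noteq> 0" for w
    unfolding AFe_def using Ph_per[OF c1 X that] Ph_per[OF c2 X that] Ph_per[OF c3 X that]
    by (simp add: m_def algebra_simps)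
  have hF: "Ph c1 X holomorphic_on (-{0})" by (rule Ph_holo[OF c1 X])
  have hE: "AFe c1 c2 c3 X holomorphic_on (-{0})"
    unfolding AFe_def[abs_def]
    by (intro holomorphic_intros Ph_holo[OF c1 X] Ph_holo[OF c2 X] Ph_holo[OF c3 X])
  have s12: "th (c2 / c1) = - (c2 / c1) * th (c1 / c2)" by (rule th_swap[OF c1 c2])
  have s13: "th (c3 / c1) = - (c3 / c1) * th (c1 / c3)" by (rule th_swap[OF c1 c3])
  have s23: "th (c3 / c2) = - (c3 / c2) * th (c2 / c3)" by (rule th_swap[OF c2 c3])
  have E1: "AFe c1 c2 c3 X (1 / c1) = 0"
  proof -
    have a1: "Ph c1 X (1 / c1) = 0" unfolding Ph_def using c1 th1 by simp
    have a2: "Ph c2 X (1 / c1) = th (c2 / c1) * th (c1 * c2 / X)"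
      unfolding Ph_def using c1 by (simp add: field_simps)
    have a3: "Ph c3 X (1 / c1) = th (c3 / c1) * th (c1 * c3 / X)"
      unfolding Ph_def using c1 by (simp add: field_simps)
    show ?thesis unfolding AFe_def a1 a2 a3 s12 s13 using c1 c3 by (simp add: field_simps)
  qed
  have E2: "AFe c1 c2 c3 X (c1 / X) = 0"
  proof -
    have a1: "Ph c1 X (c1 / X) = 0" unfolding Ph_def using c1 X th1 by simp
    have a2: "Ph c2 X (c1 / X) = th (c1 * c2 / X) * th (c2 / c1)"
      unfolding Ph_def using c1 X by (simp add: field_simps)
    have a3: "Ph c3 X (c1 / X) = th (c1 * c3 / X) * th (c3 / c1)"
      unfolding Ph_def using c1 X by (simp add: field_simps)
    show ?thesis unfolding AFe_def a1 a2 a3 s12 s13 using c1 c3 by (simp add: field_simps)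
  qed
  have E3: "AFe c1 c2 c3 X (1 / c2) = 0"
  proof -
    have a1: "Ph c1 X (1 / c2) = th (c1 / c2) * th (c1 * c2 / X)"
      unfolding Ph_def using c2 by (simp add: field_simps)
    have a2: "Ph c2 X (1 / c2) = 0" unfolding Ph_def using c2 th1 by simp
    have a3: "Ph c3 X (1 / c2) = th (c3 / c2) * th (c2 * c3 / X)"
      unfolding Ph_def using c2 by (simp add: field_simps)
    show ?thesis unfolding AFe_def a1 a2 a3 s23 using c2 c3 by (simp add: field_simps)
  qed
  have zer: "AFe c1 c2 c3 X v = 0 \<and> deriv (Ph c1 X) v \<noteq> 0" if v: "v \<noteq> 0" and Fv: "Ph c1 X v = 0" for v
  proof -
    have cv: "c1 * v \<noteq> 0" and cxv: "c1 / (X * v) \<noteq> 0" using c1 X v by auto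
    have not_both: False if A: "th (c1 * v) = 0" and B: "th (c1 / (X * v)) = 0"
    proof -
      obtain k where k: "c1 * v = p powi k" using A th_zero_iff[OF cv] by blast
      obtain j where j: "c1 / (X * v) = p powi j" using B th_zero_iff[OF cxv] by blast
      have "c1\<^sup>2 = X * ((c1 * v) * (c1 / (X * v)))" using X v by (simp add: field_simps power2_eq_square)
      also have "\<dots> = X * p powi (k + j)" unfolding k j using p0 by (simp add: power_int_add)
      finally show False using G1 by blast
    qed
    have dF: "deriv (Ph c1 X) v = D (c1 * v) * c1 * th (c1 / (X * v)) + th (c1 * v) * (D (c1 / (X * v)) * (- c1 / (X * v\<^sup>2)))"
      by (rule Ph_deriv[OF c1 X v])
    show ?thesis
    proof (cases "th (c1 * v) = 0")
      case True
      then have B: "th (c1 / (X * v)) \<noteq> 0" using not_both by blast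
      obtain k where k: "c1 * v = p powi k" using True th_zero_iff[OF cv] by blast
      have vv: "v = p powi k * (1 / c1)" using k c1 by (simp add: field_simps)
      have "AFe c1 c2 c3 X v = 0"
        unfolding vv using per_zero[of "AFe c1 c2 c3 X" m, OF perE m0, of "1/c1" k] c1 E1 by simp
      moreover have "deriv (Ph c1 X) v \<noteq> 0" unfolding dF using True B D_nz[OF cv True] c1 by simp
      ultimately show ?thesis by simp
    next
      case False
      then have B: "th (c1 / (X * v)) = 0" using Fv by (simp add: Ph_def)
      obtain j where j: "c1 / (X * v) = p powi j" using B th_zero_iff[OF cxv] by blast
      have vv: "v = p powi (- j) * (c1 / X)" using j c1 X v p0
        by (simp add: power_int_minus field_simps)
      have "AFe c1 c2 c3 X v = 0"
        unfolding vv using per_zero[of "AFe c1 c2 c3 X" m, OF perE m0, of "c1/X" "-j"] c1 X E2 by simp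
      moreover have "deriv (Ph c1 X) v \<noteq> 0" unfolding dF using False B D_nz[OF cxv B] c1 X v by simp
      ultimately show ?thesis by simp
    qed
  qed
  have w1: "1 / c2 \<noteq> 0" "Ph c1 X (1 / c2) \<noteq> 0"
  proof -
    show "1 / c2 \<noteq> 0" using c2 by simp
    have "Ph c1 X (1 / c2) = th (c1 / c2) * th (c1 * c2 / X)"
      unfolding Ph_def using c2 by (simp add: field_simps)
    then show "Ph c1 X (1 / c2) \<noteq> 0" using G2 by simp
  qed
  show ?thesis
    by (rule liou_quot[OF hE hF perE perF m0 zer w1 E3 w])
qed

lemma th_cont_comp:
  fixes g :: "complex \<Rightarrow> complex"
  shows "isCont g x \<Longrightarrow> g x \<noteq> 0 \<Longrightarrow> isCont (\<lambda>y. th (g y)) x"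
  using continuous_at_compose[of x g "\<lambda>z. th z"] th_cont unfolding o_def by blast

end

lemma islimpt_cocountable:
  fixes S :: "complex set"
  assumes S: "open S" "x \<in> S" and C: "countable C"
  shows "x islimpt (S - C)"
  unfolding islimpt_def
proof (intro allI impI)
  fix T assume T: "x \<in> T" "open T"
  then have "open (T \<inter> S)" "x \<in> T \<inter> S" using S by auto
  then obtain e where e: "e > 0" "ball x e \<subseteq> T \<inter> S" using open_contains_ball by blast
  define L where "L = (\<lambda>t::real. x + of_real t) ` {0<..<e}"
  have inj: "inj_on (\<lambda>t::real. x + of_real t) {0<..<e}" by (rule inj_onI) simp
  have "uncountable {0<..<e}" using e by (simp add: uncountable_open_interval)
  then have unc: "uncountable L" unfolding L_def using countable_image_inj_on[OF _ inj] by blast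
  have "\<not> L \<subseteq> C" using unc C countable_subset by blast
  then obtain y where y: "y \<in> L" "y \<notin> C" by blast
  then obtain t where t: "t \<in> {0<..<e}" "y = x + of_real t" unfolding L_def by blast
  have "y \<in> ball x e" using t by (simp add: dist_norm)
  moreover have "y \<noteq> x" using t by simp
  ultimately show "\<exists>y\<in>S - C. y \<in> T \<and> y \<noteq> x" using e y by blast
qed

lemma cont_zero:
  fixes f :: "complex \<Rightarrow> complex"
  assumes c: "isCont f x" and l: "x islimpt U" and z: "\<And>u. u \<in> U \<Longrightarrow> f u = 0"
  shows "f x = 0"
proof -
  have nt: "\<not> trivial_limit (at x within U)" using l by (simp add: trivial_limit_within)
  have t1: "(f \<longlongrightarrow> f x) (at x within U)"
    using c unfolding isCont_def by (rule tendsto_within_subset) simp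
  have "eventually (\<lambda>u. f u = 0) (at x within U)"
    unfolding eventually_at_filter using z by (intro always_eventually) auto
  then have t2: "(f \<longlongrightarrow> 0) (at x within U)" by (rule tendsto_eventually)
  show ?thesis using tendsto_unique[OF nt t1 t2] .
qed

context thp begin

lemma AF:
  assumes c1: "c1 \<noteq> 0" and c2: "c2 \<noteq> 0" and c3: "c3 \<noteq> 0" and X: "X \<noteq> 0" and w: "w \<noteq> 0"
  shows "AFe c1 c2 c3 X w = 0"
proof -
  define f where "f c = AFe c c2 c3 X w" for c
  define C where "C = {c. \<exists>k. c\<^sup>2 = X * p powi k} \<union> {c. c \<noteq> 0 \<and> th (c / c2) = 0}
     \<union> {c. c \<noteq> 0 \<and> th (c * c2 / X) = 0}"
  have cC: "countable C"
  proof -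
    have s1: "{c. \<exists>k. c\<^sup>2 = X * p powi k} \<subseteq>
       range (\<lambda>k::int. csqrt (X * p powi k)) \<union> range (\<lambda>k::int. - csqrt (X * p powi k))"
    proof
      fix c assume "c \<in> {c. \<exists>k. c\<^sup>2 = X * p powi k}"
      then obtain k where k: "c\<^sup>2 = X * p powi k" by blast
      define s where "s = csqrt (X * p powi k)"
      have ss: "s\<^sup>2 = X * p powi k" unfolding s_def by simp
      have "(c - s) * (c + s) = c\<^sup>2 - s\<^sup>2"
        by (simp add: algebra_simps power2_eq_square)
      also have "\<dots> = 0" using k ss by simp
      finally have "c - s = 0 \<or> c + s = 0" by simp
      then have "c = s \<or> c = - s" by (simp add: eq_neg_iff_add_eq_0)
      then have "c = csqrt (X * p powi k) \<or> c = - csqrt (X * p powi k)" by (simp add: s_def)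
      then show "c \<in> range (\<lambda>k::int. csqrt (X * p powi k)) \<union> range (\<lambda>k::int. - csqrt (X * p powi k))"
        by blast
    qed
    have s2: "{c. c \<noteq> 0 \<and> th (c / c2) = 0} \<subseteq> range (\<lambda>k::int. c2 * p powi k)"
    proof
      fix c assume "c \<in> {c. c \<noteq> 0 \<and> th (c / c2) = 0}"
      then have "c / c2 \<noteq> 0" "th (c / c2) = 0" using c2 by auto
      then obtain k where "c / c2 = p powi k" using th_zero_iff by blast
      then have "c = c2 * p powi k" using c2 by (simp add: field_simps)
      then show "c \<in> range (\<lambda>k::int. c2 * p powi k)" by blast
    qed
    have s3: "{c. c \<noteq> 0 \<and> th (c * c2 / X) = 0} \<subseteq> range (\<lambda>k::int. X / c2 * p powi k)"
    proof
      fix c assume "c \<in> {c. c \<noteq> 0 \<and> th (c * c2 / X) = 0}"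
      then have "c * c2 / X \<noteq> 0" "th (c * c2 / X) = 0" using c2 X by auto
      then obtain k where "c * c2 / X = p powi k" using th_zero_iff by blast
      then have "c = X / c2 * p powi k" using c2 X by (simp add: field_simps)
      then show "c \<in> range (\<lambda>k::int. X / c2 * p powi k)" by blast
    qed
    show ?thesis unfolding C_def
      by (intro countable_Un countable_subset[OF s1] countable_subset[OF s2] countable_subset[OF s3]
          countable_image) auto
  qed
  have zero: "f c = 0" if "c \<in> -{0} - C" for c
  proof -
    have c: "c \<noteq> 0" using that by simp
    have G1: "\<And>k. c\<^sup>2 \<noteq> X * p powi k" using that by (auto simp: C_def)
    have G2: "th (c / c2) \<noteq> 0" "th (c * c2 / X) \<noteq> 0" using that c by (auto simp: C_def)
    show ?thesis unfolding f_def by (rule AF_generic[OF c c2 c3 X G1 G2 w])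
  qed
  have cont: "isCont f c1"
  proof -
    have t: "isCont (\<lambda>c. th (a * c)) c1" if "a \<noteq> 0" for a
      by (rule th_cont_comp) (use that c1 in \<open>auto intro!: continuous_intros\<close>)
    have t2: "isCont (\<lambda>c. th (c * a)) c1" if "a \<noteq> 0" for a
      using t[OF that] by (simp add: mult.commute)
    have t3: "isCont (\<lambda>c. th (c / a)) c1" if "a \<noteq> 0" for a
      using t[of "1/a"] that by (simp add: divide_inverse mult.commute)
    have t4: "isCont (\<lambda>c. th (c * a / b)) c1" if "a \<noteq> 0" "b \<noteq> 0" for a b
      using t[of "a/b"] that by (simp add: mult.commute)
    have eqf: "f = (\<lambda>c. (th (c * w) * th (c / (X * w))) * (th (c2 * c3 / X) * th (c2 / c3))
     - Ph c2 X w * (th (c * c3 / X) * th (c / c3))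
     + (c2 / c3) * Ph c3 X w * (th (c * c2 / X) * th (c / c2)))"
      unfolding f_def[abs_def] AFe_def Ph_def by simp
    show ?thesis unfolding eqf
      by (intro continuous_intros t2 t3 t4) (use c1 c2 c3 X w in auto)
  qed
  have lim: "c1 islimpt (-{0} - C)"
    by (rule islimpt_cocountable[OF _ _ cC]) (use c1 in \<open>auto simp: open_Compl\<close>)
  have "f c1 = 0" by (rule cont_zero[OF cont lim zero])
  then show ?thesis by (simp add: f_def)
qed

end


locale thpq = thp +
  fixes q :: complex
  assumes q0: "q \<noteq> 0"
begin

abbreviation ep where "ep z n \<equiv> epoch p q z n"
abbreviation Mc where "Mc n l a k \<equiv> Mcoef p q n l a k"
abbreviation Dc where "Dc l a b c \<equiv> Dcoef p q l a b c"

lemma ep_0[simp]: "ep z 0 = 1" by (simp add: epoch_def)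

lemma ep_Suc: "ep z (Suc n) = ep z n * th (z * q ^ n)"
  by (simp add: epoch_def)

lemma ep_Suc2: "ep z (Suc n) = th z * ep (z * q) n"
  unfolding epoch_def prod.lessThan_Suc_shift by (simp add: mult.assoc)

lemma ep_add: "ep z (a + b) = ep z a * ep (z * q ^ a) b"
  by (induction b) (simp_all add: ep_Suc power_add mult.assoc)

lemma ep_nz_le: "ep z n \<noteq> 0 \<Longrightarrow> m \<le> n \<Longrightarrow> ep z m \<noteq> 0"
  using ep_add[of z m "n - m"] by auto

lemma ep_nz_th: "ep z n \<noteq> 0 \<Longrightarrow> i < n \<Longrightarrow> th (z * q ^ i) \<noteq> 0"
proof -
  assume a: "ep z n \<noteq> 0" and i: "i < n"
  obtain k where k: "n - i = Suc k" using i by (cases "n - i") auto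
  have nn: "n = i + (n - i)" using i by simp
  have "ep z n = ep z i * ep (z * q ^ i) (n - i)" by (subst nn, rule ep_add)
  then have "ep z n = ep z i * ep (z * q ^ i) (Suc k)" using k by simp
  also have "\<dots> = ep z i * (th (z * q ^ i) * ep (z * q ^ i * q) k)" by (simp only: ep_Suc2)
  finally show ?thesis using a by auto
qed

lemma R1:
  assumes lm: "l \<le> m" and nz: "ep (q * X) (Suc (m + l)) \<noteq> 0" "ep q (Suc (m - l)) \<noteq> 0" "th X \<noteq> 0"
  shows "Mc (Suc m) l X K * (th (q * X * q ^ (m + l)) * th (q * q ^ (m - l)))
       = Mc m l X K * (th (K * q ^ (m + l)) * th (K / X * q ^ (m - l))) * X"
proof -
  have s1: "Suc m + l = Suc (m + l)" "Suc m - l = Suc (m - l)" using lm by auto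
  have n1: "ep (q * X) (m + l) \<noteq> 0" "th (q * X * q ^ (m + l)) \<noteq> 0"
    using nz(1) by (auto simp: ep_Suc)
  have n2: "ep q (m - l) \<noteq> 0" "th (q * q ^ (m - l)) \<noteq> 0"
    using nz(2) by (auto simp: ep_Suc)
  show ?thesis
    unfolding Mcoef_def using lm s1 n1 n2 nz(3)
    by (simp add: ep_Suc field_simps)
qed

lemma AFt:
  assumes lm: "l \<le> m" and X: "X \<noteq> 0" and K: "K \<noteq> 0"
  shows "th (K * q ^ (m + l)) * th (K / X * q ^ (m - l)) * (th (X * q ^ Suc m) * th (q ^ Suc m))
       = th (q * X * q ^ (m + l)) * th (q * q ^ (m - l)) * (th (K * q ^ m) * th (K / X * q ^ m))
         + q ^ Suc m / q ^ l * (th (X * q ^ l) * th (q ^ l)) * (th (K * q ^ (2 * m + 1)) * th (K / (X * q)))"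
proof -
  define c1 c2 w where "c1 = K * q ^ m" "c2 = X * q ^ Suc m" "w = q ^ l"
  have nz: "c1 \<noteq> 0" "c2 \<noteq> 0" "w \<noteq> 0" using X K q0 by (auto simp: c1_c2_w_def)
  have af: "AFe c1 c2 X X w = 0" by (rule AF[OF nz(1,2) X X nz(3)])
  have ql: "q ^ m = q ^ (m - l) * q ^ l" using lm by (simp add: power_add[symmetric])
  have e1: "Ph c1 X w = th (K * q ^ (m + l)) * th (K / X * q ^ (m - l))"
  proof -
    have "c1 * w = K * q ^ (m + l)" by (simp add: c1_c2_w_def power_add)
    moreover have "c1 / (X * w) = K / X * q ^ (m - l)" using q0 X by (simp add: c1_c2_w_def ql field_simps)
    ultimately show ?thesis by (simp add: Ph_def)
  qed
  have e2: "Ph c2 X w = th (q * X * q ^ (m + l)) * th (q * q ^ (m - l))"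
  proof -
    have "c2 * w = q * X * q ^ (m + l)" by (simp add: c1_c2_w_def power_add)
    moreover have "c2 / (X * w) = q * q ^ (m - l)" using q0 X by (simp add: c1_c2_w_def ql field_simps)
    ultimately show ?thesis by (simp add: Ph_def)
  qed
  have e3: "Ph X X w = - (th (X * q ^ l) * th (q ^ l)) / q ^ l"
  proof -
    have a: "X / (X * w) = 1 / q ^ l" using X by (simp add: c1_c2_w_def)
    have b: "th (1 / q ^ l) = - th (q ^ l) / q ^ l" using thinv'[of "q ^ l"] q0 by (simp add: inverse_eq_divide)
    show ?thesis unfolding Ph_def a b by (simp add: c1_c2_w_def)
  qed
  have a1: "c2 * X / X = X * q ^ Suc m" "c2 / X = q ^ Suc m" "c1 * X / X = K * q ^ m"
    "c1 / X = K / X * q ^ m" "c1 * c2 / X = K * q ^ (2 * m + 1)" "c1 / c2 = K / (X * q)"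
  proof -
    have qq: "q ^ (2 * m + 1) = q ^ m * q ^ m * q" by (simp add: mult_2 power_add)
    show "c2 * X / X = X * q ^ Suc m" "c2 / X = q ^ Suc m" "c1 * X / X = K * q ^ m"
      "c1 / X = K / X * q ^ m" "c1 * c2 / X = K * q ^ (2 * m + 1)" "c1 / c2 = K / (X * q)"
      using X q0 unfolding qq by (auto simp: c1_c2_w_def field_simps)
  qed
  have "c2 / X = q ^ Suc m" by (rule a1(2))
  from af show ?thesis unfolding AFe_def e1 e2 e3 a1 using q0
    by (simp add: field_simps)
qed

lemma F2:
  assumes B: "B \<noteq> 0" and C: "C \<noteq> 0" and X: "X \<noteq> 0"
    and nz: "ep (X * q / B) (Suc j) \<noteq> 0" "ep (X * q / C) (Suc j) \<noteq> 0"
  shows "Dc (Suc j) X B C * (th (X * q / B) * th (X * q / C))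
       = Dc j (X * q\<^sup>2) (B * q) (C * q) * (th B * th C) * (X * q / (B * C))"
proof -
  have a1: "X * q\<^sup>2 * q / (B * q) = X * q / B * q" "X * q\<^sup>2 * q / (C * q) = X * q / C * q"
    "X * q\<^sup>2 * q / (B * q * (C * q)) = X * q / (B * C)"
    using q0 B C by (auto simp: field_simps power2_eq_square)
  have n1: "th (X * q / B) \<noteq> 0" "ep (X * q / B * q) j \<noteq> 0" using nz(1) by (auto simp: ep_Suc2)
  have n2: "th (X * q / C) \<noteq> 0" "ep (X * q / C * q) j \<noteq> 0" using nz(2) by (auto simp: ep_Suc2)
  show ?thesis
    unfolding Dcoef_def a1 ep_Suc2[of B] ep_Suc2[of C] ep_Suc2[of "X * q / B"] ep_Suc2[of "X * q / C"]
      power_Suc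
    using n1 n2 by (simp add: field_simps)
qed

lemma Mc0: "Mc n 0 a k = ep k n * ep (k / a) n / (ep (q * a) n * ep q n) * (th a / th a) * a ^ n"
  by (simp add: Mcoef_def)

lemma Mcl: "l \<le> n \<Longrightarrow> Mc n l a k = ep k (n + l) * ep (k / a) (n - l) / (ep (q * a) (n + l) * ep q (n - l))
    * (th (a * q ^ (2 * l)) / th a) * a ^ (n - l)"
  by (simp add: Mcoef_def)

lemma F3:
  assumes A: "A \<noteq> 0" and X: "X \<noteq> 0" and nz: "th A \<noteq> 0" "th (A * q) \<noteq> 0"
    "ep (q * A) (Suc j) \<noteq> 0" "ep q (Suc j) \<noteq> 0"
  shows "Mc (Suc j) 0 A X * (th (X * q ^ Suc j) * th (q * A) * th (q * q ^ j)) * q ^ j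
       = Mc j 0 (A * q) (X * q\<^sup>2) * (th X * th (X * q) * th (X / A)) * A"
proof -
  have a1: "X * q\<^sup>2 / (A * q) = X / A * q" "q * (A * q) = q * A * q" "X * q\<^sup>2 = X * q * q"
    using q0 A by (auto simp: field_simps power2_eq_square)
  have e1: "ep X (Suc j) * th (X * q ^ Suc j) = th X * (th (X * q) * ep (X * q * q) j)"
    by (metis ep_Suc ep_Suc2)
  have n1: "th (q * A) \<noteq> 0" "ep (q * A * q) j \<noteq> 0" using nz(3) by (auto simp: ep_Suc2)
  have n2: "ep q j \<noteq> 0" "th (q * q ^ j) \<noteq> 0" using nz(4) by (auto simp: ep_Suc)
  have "Mc (Suc j) 0 A X * (th (X * q ^ Suc j) * th (q * A) * th (q * q ^ j)) * q ^ j
      = (ep X (Suc j) * th (X * q ^ Suc j)) * (th (X / A) * ep (X / A * q) j) / (th (q * A) * ep (q * A * q) j * (ep q j * th (q * q ^ j)))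
         * (th A / th A) * A ^ Suc j * (th (q * A) * th (q * q ^ j)) * q ^ j"
    unfolding Mc0 ep_Suc2[of "X / A"] ep_Suc2[of "q * A"] ep_Suc[of q] by (simp add: field_simps)
  also have "\<dots> = th X * (th (X * q) * ep (X * q * q) j) * (th (X / A) * ep (X / A * q) j) / (th (q * A) * ep (q * A * q) j * (ep q j * th (q * q ^ j)))
         * (th A / th A) * A ^ Suc j * (th (q * A) * th (q * q ^ j)) * q ^ j"
    unfolding e1 ..
  also have "\<dots> = Mc j 0 (A * q) (X * q\<^sup>2) * (th X * th (X * q) * th (X / A)) * A"
    unfolding Mc0 a1 using nz(1,2) n1 n2 q0 A by (simp add: field_simps)
  finally show ?thesis .
qed

lemma ep_SS: "ep z (Suc (Suc n)) = th z * th (z * q) * ep (z * q * q) n"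
  by (simp add: ep_Suc2 mult.assoc)

lemma F1:
  assumes jm: "Suc j \<le> m" and X: "X \<noteq> 0"
    and nz: "th X \<noteq> 0" "th (X * q\<^sup>2) \<noteq> 0" "ep (q * X) (Suc (Suc (m + j))) \<noteq> 0" "ep q (Suc (m - Suc j)) \<noteq> 0"
  shows "Mc m (Suc j) X K * (th (K / (X * q)) * th (q * X) * th X * X * q ^ (2 * (m - Suc j) + 2))
       = Mc m j (X * q\<^sup>2) (K * q) * (th K * th (q * X * q ^ (m + Suc j)) * th (q * q ^ (m - Suc j)))"
proof -
  define d where "d = m - Suc j"
  have md: "m - j = Suc d" "m + Suc j = Suc (m + j)" using jm by (auto simp: d_def)
  have a1: "K * q / (X * q\<^sup>2) = K / (X * q)" "K / (X * q) * q = K / X" "q * (X * q\<^sup>2) = q * X * q * q"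
    "X * q\<^sup>2 * q ^ (2 * j) = X * q ^ (2 * Suc j)" "q * X * q = X * q\<^sup>2"
    using q0 X by (auto simp: field_simps power2_eq_square power_add)
  have e1: "ep (q * X) (Suc (m + j)) * th (q * X * q ^ Suc (m + j)) = th (q * X) * th (q * X * q) * ep (q * X * q * q) (m + j)"
    by (metis ep_SS ep_Suc)
  have n1a: "ep (q * X * q * q) (m + j) \<noteq> 0" "th (q * X) \<noteq> 0"
    using nz(3) unfolding ep_SS by auto
  have n1b: "ep (q * X) (Suc (m + j)) \<noteq> 0" "th (q * X * q ^ Suc (m + j)) \<noteq> 0"
    using nz(3) unfolding ep_Suc[of "q*X" "Suc (m+j)"] by auto
  note n1 = n1a n1b
  have n2: "ep q d \<noteq> 0" "th (q * q ^ d) \<noteq> 0" using nz(4) by (auto simp: ep_Suc d_def)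
  have L: "Mc m (Suc j) X K = th K * ep (K * q) (m + j) * ep (K / X) d / (ep (q * X) (Suc (m + j)) * ep q d)
      * (th (X * q ^ (2 * Suc j)) / th X) * X ^ d"
    using jm by (simp add: Mcl d_def ep_Suc2)
  have R: "Mc m j (X * q\<^sup>2) (K * q) = ep (K * q) (m + j) * (th (K / (X * q)) * ep (K / X) d)
      / (ep (q * X * q * q) (m + j) * (ep q d * th (q * q ^ d)))
      * (th (X * q ^ (2 * Suc j)) / th (X * q\<^sup>2)) * (X * q\<^sup>2) ^ Suc d"
  proof -
    have "Mc m j (X * q\<^sup>2) (K * q) = ep (K * q) (m + j) * ep (K * q / (X * q\<^sup>2)) (m - j)
      / (ep (q * (X * q\<^sup>2)) (m + j) * ep q (m - j)) * (th (X * q\<^sup>2 * q ^ (2 * j)) / th (X * q\<^sup>2)) * (X * q\<^sup>2) ^ (m - j)"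
      using jm by (intro Mcl) simp
    also have "\<dots> = ep (K * q) (m + j) * (th (K / (X * q)) * ep (K / X) d)
      / (ep (q * X * q * q) (m + j) * (ep q d * th (q * q ^ d)))
      * (th (X * q ^ (2 * Suc j)) / th (X * q\<^sup>2)) * (X * q\<^sup>2) ^ Suc d"
      unfolding md(1) a1 ep_Suc2[of "K / (X * q)"] ep_Suc[of q d] ..
    finally show ?thesis .
  qed
  have "Mc m (Suc j) X K * (th (K / (X * q)) * th (q * X) * th X * X * q ^ (2 * (m - Suc j) + 2))
     = th K * ep (K * q) (m + j) * ep (K / X) d / (ep (q * X) (Suc (m + j)) * th (q * X * q ^ Suc (m + j)) * ep q d)
      * (th (X * q ^ (2 * Suc j)) / th X) * X ^ d * (th (K / (X * q)) * th (q * X) * th X * X * q ^ (2 * d + 2))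
      * th (q * X * q ^ Suc (m + j))"
    unfolding L d_def[symmetric] using n1 by (simp add: field_simps)
  also have "\<dots> = th K * ep (K * q) (m + j) * ep (K / X) d / (th (q * X) * th (q * X * q) * ep (q * X * q * q) (m + j) * ep q d)
      * (th (X * q ^ (2 * Suc j)) / th X) * X ^ d * (th (K / (X * q)) * th (q * X) * th X * X * q ^ (2 * d + 2))
      * th (q * X * q ^ Suc (m + j))"
    unfolding e1 ..
  also have "\<dots> = Mc m j (X * q\<^sup>2) (K * q) * (th K * th (q * X * q ^ (m + Suc j)) * th (q * q ^ (m - Suc j)))"
  proof -
    have qd: "q ^ (2 * d + 2) = q ^ d * q ^ d * q * q" by (simp add: power_add mult_2 power2_eq_square)
    show ?thesis
    unfolding R md(2) d_def[symmetric] a1(5) qd using n1 n2 nz(1,2) q0 X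
    by (simp add: field_simps power2_eq_square power_mult_distrib)
  qed
  finally show ?thesis .
qed

lemma F1top:
  assumes X: "X \<noteq> 0" and nz: "th X \<noteq> 0" "th (X * q\<^sup>2) \<noteq> 0" "ep (q * X) (Suc (Suc (m + m))) \<noteq> 0"
  shows "Mc (Suc m) (Suc m) X K * (th (q * X) * th X) = Mc m m (X * q\<^sup>2) (K * q) * (th K * th (K * q ^ (2 * m + 1)))"
proof -
  have a1: "q * (X * q\<^sup>2) = q * X * q * q" "X * q\<^sup>2 * q ^ (2 * m) = X * q ^ (2 * Suc m)" "q * X * q = X * q\<^sup>2"
    using q0 X by (auto simp: field_simps power2_eq_square power_add)
  have a14: "K * q * q ^ (m + m) = K * q ^ (2 * m + 1)" by (simp add: mult_2)
  note a1 = a1 a14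
  have n1: "ep (q * X * q * q) (m + m) \<noteq> 0" "th (q * X) \<noteq> 0" "th (q * X * q) \<noteq> 0"
    using nz(3) unfolding ep_SS by auto
  have L: "Mc (Suc m) (Suc m) X K = th K * (ep (K * q) (m + m) * th (K * q ^ (2 * m + 1)))
      / (th (q * X) * th (q * X * q) * ep (q * X * q * q) (m + m)) * (th (X * q ^ (2 * Suc m)) / th X)"
  proof -
    have "Mc (Suc m) (Suc m) X K = ep K (Suc (Suc (m + m))) / ep (q * X) (Suc (Suc (m + m))) * (th (X * q ^ (2 * Suc m)) / th X)"
      by (simp add: Mcl)
    also have "\<dots> = th K * (ep (K * q) (m + m) * th (K * q * q ^ (m + m)))
      / (th (q * X) * th (q * X * q) * ep (q * X * q * q) (m + m)) * (th (X * q ^ (2 * Suc m)) / th X)"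
      unfolding ep_SS[of "q * X"] ep_Suc2[of K "Suc (m + m)"] ep_Suc[of "K * q" "m + m"] by simp
    finally show ?thesis unfolding a1(4) .
  qed
  have R: "Mc m m (X * q\<^sup>2) (K * q) = ep (K * q) (m + m) / ep (q * X * q * q) (m + m) * (th (X * q ^ (2 * Suc m)) / th (X * q\<^sup>2))"
    by (simp add: Mcl a1(1,2))
  show ?thesis unfolding L R using n1 nz(1,2) unfolding a1(3) by (simp add: field_simps)
qed

end


context thpq begin

definition Tt where "Tt X A K B C n l = Mc n l X K * Dc l X B C * Mc l 0 A X"

definition C1c where "C1c X K m = X * (th (K * q ^ m) * th (K / X * q ^ m)) / (th (X * q ^ Suc m) * th (q ^ Suc m))"

definition C2c where "C2c X A K B C m = K / q ^ m * th (K * q ^ (2 * m + 1)) * th K * th B * th C * th (X / A)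
   / (th (X * q ^ Suc m) * th (q ^ Suc m) * th (X * q / B) * th (X * q / C) * th (q * A))"

definition Gd where "Gd X A B C n \<longleftrightarrow> th X \<noteq> 0 \<and> th A \<noteq> 0 \<and> ep (q * X) (2 * n) \<noteq> 0 \<and> ep q n \<noteq> 0
   \<and> ep (X * q / B) n \<noteq> 0 \<and> ep (X * q / C) n \<noteq> 0 \<and> ep (q * A) n \<noteq> 0"

lemma Gd_th_qX: "Gd X A B C n \<Longrightarrow> 1 \<le> i \<Longrightarrow> i \<le> 2 * n \<Longrightarrow> th (X * q ^ i) \<noteq> 0"
proof -
  assume g: "Gd X A B C n" and i: "1 \<le> i" "i \<le> 2 * n"
  have "th (q * X * q ^ (i - 1)) \<noteq> 0" using ep_nz_th[of "q * X" "2 * n" "i - 1"] g i by (simp add: Gd_def)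
  moreover have "q * X * q ^ (i - 1) = X * q ^ i" using i by (cases i) auto
  ultimately show ?thesis by metis
qed

lemma Gd_th_q: "Gd X A B C n \<Longrightarrow> 1 \<le> i \<Longrightarrow> i \<le> n \<Longrightarrow> th (q ^ i) \<noteq> 0"
proof -
  assume g: "Gd X A B C n" and i: "1 \<le> i" "i \<le> n"
  have "th (q * q ^ (i - 1)) \<noteq> 0" using ep_nz_th[of q n "i - 1"] g i by (simp add: Gd_def)
  moreover have "q * q ^ (i - 1) = q ^ i" using i by (cases i) auto
  ultimately show ?thesis by metis
qed

lemma Gd_th_qA: "Gd X A B C n \<Longrightarrow> 1 \<le> i \<Longrightarrow> i \<le> n \<Longrightarrow> th (A * q ^ i) \<noteq> 0"
proof -
  assume g: "Gd X A B C n" and i: "1 \<le> i" "i \<le> n"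
  have "th (q * A * q ^ (i - 1)) \<noteq> 0" using ep_nz_th[of "q * A" n "i - 1"] g i by (simp add: Gd_def)
  moreover have "q * A * q ^ (i - 1) = A * q ^ i" using i by (cases i) auto
  ultimately show ?thesis by metis
qed

lemma Gd_mono: "Gd X A B C n \<Longrightarrow> m \<le> n \<Longrightarrow> Gd X A B C m"
  unfolding Gd_def using ep_nz_le by (meson mult_le_mono2)

lemma TW_mid:
  assumes jm: "Suc j \<le> m" and X: "X \<noteq> 0" and A: "A \<noteq> 0" and K: "K \<noteq> 0" and B: "B \<noteq> 0" and C: "C \<noteq> 0"
    and rel: "B * C * K = q * X * A" and G: "Gd X A B C (Suc m)"
  shows "Tt X A K B C (Suc m) (Suc j) = C1c X K m * Tt X A K B C m (Suc j)
           + C2c X A K B C m * Tt (X * q\<^sup>2) (A * q) (K * q) (B * q) (C * q) m j"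
proof -
  obtain d where m: "m = Suc (j + d)" using le_Suc_ex[OF jm] by auto
  have md: "m - Suc j = d" using m by simp
  define McN where "McN = Mc (Suc m) (Suc j) X K"
  define McM where "McM = Mc m (Suc j) X K"
  define McP where "McP = Mc m j (X * q\<^sup>2) (K * q)"
  define DD where "DD = Dc (Suc j) X B C"
  define DDp where "DDp = Dc j (X * q\<^sup>2) (B * q) (C * q)"
  define MM where "MM = Mc (Suc j) 0 A X"
  define MMp where "MMp = Mc j 0 (A * q) (X * q\<^sup>2)"
  define g where "g = th (q * X * q ^ (m + Suc j)) * th (q * q ^ (m - Suc j))"
  define f where "f = th (K * q ^ (m + Suc j)) * th (K / X * q ^ (m - Suc j))"
  define a where "a = th (X * q ^ Suc m) * th (q ^ Suc m)"
  define c where "c = th (K * q ^ m) * th (K / X * q ^ m)"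
  define h where "h = th (X * q ^ Suc j) * th (q ^ Suc j)"
  define k where "k = th (K * q ^ (2 * m + 1)) * th (K / (X * q))"
  have Gs: "th X \<noteq> 0" "th A \<noteq> 0" "ep (q * X) (2 * Suc m) \<noteq> 0" "ep q (Suc m) \<noteq> 0"
    "ep (X * q / B) (Suc m) \<noteq> 0" "ep (X * q / C) (Suc m) \<noteq> 0" "ep (q * A) (Suc m) \<noteq> 0"
    using G by (auto simp: Gd_def)
  have r1: "McN * g = McM * f * X"
    unfolding McN_def McM_def g_def f_def
  proof (rule R1)
    show "Suc j \<le> m" by (rule jm)
    show "ep (q * X) (Suc (m + Suc j)) \<noteq> 0" using ep_nz_le[OF Gs(3)] jm by simp
    show "ep q (Suc (m - Suc j)) \<noteq> 0" using ep_nz_le[OF Gs(4)] jm by simp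
    show "th X \<noteq> 0" by (rule Gs(1))
  qed
  have af: "f * a = g * c + q ^ Suc m / q ^ Suc j * h * k"
    unfolding f_def a_def g_def c_def h_def k_def using AFt[OF _ X K, of "Suc j" m] jm by simp
  have thXq2: "th (X * q\<^sup>2) \<noteq> 0" using Gd_th_qX[OF G, of 2] by simp
  have thXq: "th (X * q) \<noteq> 0" using Gd_th_qX[OF G, of 1] by simp
  have thqA: "th (q * A) \<noteq> 0" using Gd_th_qA[OF G, of 1] by (simp add: mult.commute)
  have thAq: "th (A * q) \<noteq> 0" using thqA by (simp add: mult.commute)
  have f1: "McM * (th (K / (X * q)) * th (q * X) * th X * X * q ^ (2 * (m - Suc j) + 2)) = McP * (th K * g)"
    unfolding McM_def McP_def g_def using F1[OF jm X Gs(1) thXq2] ep_nz_le[OF Gs(3)] ep_nz_le[OF Gs(4)] jm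
    by (simp add: mult.assoc)
  have f2: "DD * (th (X * q / B) * th (X * q / C)) = DDp * (th B * th C) * (X * q / (B * C))"
    unfolding DD_def DDp_def using F2[OF B C X] ep_nz_le[OF Gs(5)] ep_nz_le[OF Gs(6)] jm by simp
  have f3: "MM * (th (X * q ^ Suc j) * th (q * A) * th (q * q ^ j)) * q ^ j = MMp * (th X * th (X * q) * th (X / A)) * A"
    unfolding MM_def MMp_def using F3[OF A X Gs(2) thAq] ep_nz_le[OF Gs(7)] ep_nz_le[OF Gs(4)] jm by simp
  have gnz: "g \<noteq> 0"
  proof -
    have "th (X * q ^ (Suc (m + Suc j))) \<noteq> 0" using Gd_th_qX[OF G, of "Suc (m + Suc j)"] jm by simp
    moreover have "th (q ^ Suc (m - Suc j)) \<noteq> 0" using Gd_th_q[OF G, of "Suc (m - Suc j)"] jm by simp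
    ultimately show ?thesis unfolding g_def by (simp add: mult_ac)
  qed
  have anz: "a \<noteq> 0" unfolding a_def using Gd_th_qX[OF G, of "Suc m"] Gd_th_q[OF G, of "Suc m"] by simp
  have nzB: "th (X * q / B) \<noteq> 0" using ep_nz_th[OF Gs(5), of 0] by simp
  have nzC: "th (X * q / C) \<noteq> 0" using ep_nz_th[OF Gs(6), of 0] by simp
  have kk: "X * q / (B * C) = K / A" using rel B C A by (simp add: field_simps)
  have thqX: "th (q * X) = th (X * q)" by (simp add: mult.commute)
  have T1: "Tt X A K B C (Suc m) (Suc j) = McN * DD * MM" by (simp add: Tt_def McN_def DD_def MM_def)
  have T2: "Tt X A K B C m (Suc j) = McM * DD * MM" by (simp add: Tt_def McM_def DD_def MM_def)
  have T3: "Tt (X * q\<^sup>2) (A * q) (K * q) (B * q) (C * q) m j = McP * DDp * MMp"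
    by (simp add: Tt_def McP_def DDp_def MMp_def)
  have qm: "q ^ m \<noteq> 0" using q0 by simp
  have XBC: "X * q / (B * C) \<noteq> 0" using X B C q0 by simp
  have s3: "C2c X A K B C m * (McP * DDp * MMp) =
      K / q ^ m * th (K * q ^ (2 * m + 1)) / (a * th (X * q / B) * th (X * q / C) * th (q * A))
      * ((McP * (th K * g)) * (DDp * (th B * th C) * (X * q / (B * C))) * (MMp * (th X * th (X * q) * th (X / A)) * A))
      / (g * (X * q / (B * C)) * th X * th (X * q) * A)"
    unfolding C2c_def a_def[symmetric] using gnz anz nzB nzC thqA Gs(1) thXq A XBC qm
    by (simp add: field_simps)
  have s4: "C2c X A K B C m * (McP * DDp * MMp) =
      K / q ^ m * th (K * q ^ (2 * m + 1)) / (a * th (X * q / B) * th (X * q / C) * th (q * A))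
      * ((McM * (th (K / (X * q)) * th (q * X) * th X * X * q ^ (2 * (m - Suc j) + 2)))
         * (DD * (th (X * q / B) * th (X * q / C)))
         * (MM * (th (X * q ^ Suc j) * th (q * A) * th (q * q ^ j)) * q ^ j))
      / (g * (X * q / (B * C)) * th X * th (X * q) * A)"
    unfolding s3 f1[symmetric] f2[symmetric] f3[symmetric] ..
  have s1: "McN = McM * f * X / g" using r1 gnz by (simp add: field_simps)
  have s2: "f = (g * c + q ^ Suc m / q ^ Suc j * h * k) / a" using af anz by (simp add: field_simps)
  have pw: "q ^ Suc m = q ^ Suc j * q ^ Suc d" "q ^ (2 * (m - Suc j) + 2) = q ^ Suc d * q ^ Suc d"
    "q ^ m = q ^ j * q ^ Suc d"
    using m by (simp_all add: power_add[symmetric] mult_2)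
  show ?thesis
    unfolding T1 T2 T3 s4 s1 s2 C1c_def
    unfolding c_def[symmetric] a_def[symmetric]
    unfolding kk thqX pw h_def k_def
    using gnz anz nzB nzC thqA Gs(1) thXq A X K qm q0
    by (simp add: field_simps)
qed

lemma TW_zero:
  assumes X: "X \<noteq> 0" and K: "K \<noteq> 0" and G: "Gd X A B C (Suc m)"
  shows "Tt X A K B C (Suc m) 0 = C1c X K m * Tt X A K B C m 0"
proof -
  have Gs: "th X \<noteq> 0" "ep (q * X) (2 * Suc m) \<noteq> 0" "ep q (Suc m) \<noteq> 0"
    using G by (auto simp: Gd_def)
  have r1: "Mc (Suc m) 0 X K * (th (q * X * q ^ (m + 0)) * th (q * q ^ (m - 0)))
       = Mc m 0 X K * (th (K * q ^ (m + 0)) * th (K / X * q ^ (m - 0))) * X"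
  proof (rule R1)
    show "ep (q * X) (Suc (m + 0)) \<noteq> 0" using ep_nz_le[OF Gs(2)] by simp
    show "ep q (Suc (m - 0)) \<noteq> 0" using Gs(3) by simp
  qed (use Gs in auto)
  have af: "th (K * q ^ (m + 0)) * th (K / X * q ^ (m - 0)) * (th (X * q ^ Suc m) * th (q ^ Suc m))
       = th (q * X * q ^ (m + 0)) * th (q * q ^ (m - 0)) * (th (K * q ^ m) * th (K / X * q ^ m))
         + q ^ Suc m / q ^ 0 * (th (X * q ^ 0) * th (q ^ 0)) * (th (K * q ^ (2 * m + 1)) * th (K / (X * q)))"
    by (rule AFt[OF _ X K]) simp
  have g1: "th (X * q ^ Suc m) \<noteq> 0" using Gd_th_qX[OF G, of "Suc m"] by simp
  have g2: "th (q ^ Suc m) \<noteq> 0" using Gd_th_q[OF G, of "Suc m"] by simp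
  have e: "q * X * q ^ m = X * q ^ Suc m" "q * q ^ m = q ^ Suc m" by simp_all
  show ?thesis
    using r1 af g1 g2 th1 unfolding Tt_def C1c_def e
    by (simp add: field_simps)
qed

lemma TW_top:
  assumes X: "X \<noteq> 0" and A: "A \<noteq> 0" and K: "K \<noteq> 0" and B: "B \<noteq> 0" and C: "C \<noteq> 0"
    and rel: "B * C * K = q * X * A" and G: "Gd X A B C (Suc m)"
  shows "Tt X A K B C (Suc m) (Suc m) = C2c X A K B C m * Tt (X * q\<^sup>2) (A * q) (K * q) (B * q) (C * q) m m"
proof -
  have Gs: "th X \<noteq> 0" "th A \<noteq> 0" "ep (q * X) (2 * Suc m) \<noteq> 0" "ep q (Suc m) \<noteq> 0"
    "ep (X * q / B) (Suc m) \<noteq> 0" "ep (X * q / C) (Suc m) \<noteq> 0" "ep (q * A) (Suc m) \<noteq> 0"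
    using G by (auto simp: Gd_def)
  define McN where "McN = Mc (Suc m) (Suc m) X K"
  define McP where "McP = Mc m m (X * q\<^sup>2) (K * q)"
  define DD where "DD = Dc (Suc m) X B C"
  define DDp where "DDp = Dc m (X * q\<^sup>2) (B * q) (C * q)"
  define MM where "MM = Mc (Suc m) 0 A X"
  define MMp where "MMp = Mc m 0 (A * q) (X * q\<^sup>2)"
  have thXq2: "th (X * q\<^sup>2) \<noteq> 0" using Gd_th_qX[OF G, of 2] by simp
  have thXq: "th (X * q) \<noteq> 0" using Gd_th_qX[OF G, of 1] by simp
  have thqA: "th (q * A) \<noteq> 0" using Gd_th_qA[OF G, of 1] by (simp add: mult.commute)
  have thAq: "th (A * q) \<noteq> 0" using thqA by (simp add: mult.commute)
  have f1: "McN * (th (q * X) * th X) = McP * (th K * th (K * q ^ (2 * m + 1)))"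
  proof -
    have "ep (q * X) (Suc (Suc (m + m))) \<noteq> 0" using Gs(3) by (simp add: mult_2)
    then show ?thesis unfolding McN_def McP_def using F1top[OF X Gs(1) thXq2] by blast
  qed
  have f2: "DD * (th (X * q / B) * th (X * q / C)) = DDp * (th B * th C) * (X * q / (B * C))"
    unfolding DD_def DDp_def using F2[OF B C X] Gs(5,6) by simp
  have f3: "MM * (th (X * q ^ Suc m) * th (q * A) * th (q * q ^ m)) * q ^ m = MMp * (th X * th (X * q) * th (X / A)) * A"
    unfolding MM_def MMp_def using F3[OF A X Gs(2) thAq] Gs(7,4) by simp
  have nzB: "th (X * q / B) \<noteq> 0" using ep_nz_th[OF Gs(5), of 0] by simp
  have nzC: "th (X * q / C) \<noteq> 0" using ep_nz_th[OF Gs(6), of 0] by simp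
  have g1: "th (X * q ^ Suc m) \<noteq> 0" using Gd_th_qX[OF G, of "Suc m"] by simp
  have g2: "th (q ^ Suc m) \<noteq> 0" using Gd_th_q[OF G, of "Suc m"] by simp
  have kk: "X * q / (B * C) = K / A" using rel B C A by (simp add: field_simps)
  have thqX: "th (q * X) = th (X * q)" by (simp add: mult.commute)
  have qm: "q ^ m \<noteq> 0" using q0 by simp
  have XBC: "X * q / (B * C) \<noteq> 0" using X B C q0 by simp
  have T1: "Tt X A K B C (Suc m) (Suc m) = McN * DD * MM" by (simp add: Tt_def McN_def DD_def MM_def)
  have T3: "Tt (X * q\<^sup>2) (A * q) (K * q) (B * q) (C * q) m m = McP * DDp * MMp"
    by (simp add: Tt_def McP_def DDp_def MMp_def)
  have s3: "C2c X A K B C m * (McP * DDp * MMp) =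
      K / q ^ m / (th (X * q ^ Suc m) * th (q ^ Suc m) * th (X * q / B) * th (X * q / C) * th (q * A))
      * ((McP * (th K * th (K * q ^ (2 * m + 1)))) * (DDp * (th B * th C) * (X * q / (B * C))) * (MMp * (th X * th (X * q) * th (X / A)) * A))
      / ((X * q / (B * C)) * th X * th (X * q) * A)"
    unfolding C2c_def using g1 g2 nzB nzC thqA Gs(1) thXq A XBC qm
    by (simp add: field_simps)
  have s4: "C2c X A K B C m * (McP * DDp * MMp) =
      K / q ^ m / (th (X * q ^ Suc m) * th (q ^ Suc m) * th (X * q / B) * th (X * q / C) * th (q * A))
      * ((McN * (th (q * X) * th X)) * (DD * (th (X * q / B) * th (X * q / C)))
        * (MM * (th (X * q ^ Suc m) * th (q * A) * th (q * q ^ m)) * q ^ m))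
      / ((X * q / (B * C)) * th X * th (X * q) * A)"
    unfolding s3 f1[symmetric] f2[symmetric] f3[symmetric] ..
  show ?thesis
    unfolding T1 T3 s4 kk thqX using nzB nzC g1 g2 thqA Gs(1) thXq A K q0 qm
    by (simp add: field_simps)
qed

definition Rr where "Rr X A K B C n = Dc n K (B * K / X) (C * K / X) * Mc n 0 A K"

lemma Rr_form:
  assumes X: "X \<noteq> 0" and A: "A \<noteq> 0" and K: "K \<noteq> 0" and B: "B \<noteq> 0" and C: "C \<noteq> 0"
    and rel: "B * C * K = q * X * A" and tA: "th A \<noteq> 0"
  shows "Rr X A K B C n = ep (B * K / X) n * ep (C * K / X) n * ep K n * ep (K / A) n
      / (ep (X * q / B) n * ep (X * q / C) n * ep (q * A) n * ep q n) * X ^ n"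
proof -
  have a: "K * q / (B * K / X) = X * q / B" "K * q / (C * K / X) = X * q / C" using K B C X by auto
  have b: "K * q / (B * K / X * (C * K / X)) = X / A"
  proof -
    have "K * q / (B * K / X * (C * K / X)) = X * X * q / (B * C * K)" using K B C X by (simp add: field_simps)
    also have "\<dots> = X / A" unfolding rel using X A q0 by (simp add: field_simps)
    finally show ?thesis .
  qed
  show ?thesis unfolding Rr_def Dcoef_def Mc0 a b using tA A by (simp add: field_simps power_divide)
qed

lemma AFr:
  assumes X: "X \<noteq> 0" and A: "A \<noteq> 0" and K: "K \<noteq> 0" and B: "B \<noteq> 0" and C: "C \<noteq> 0"
    and rel: "B * C * K = q * X * A"
  shows "X * (th (B * K / X * q ^ m) * th (C * K / X * q ^ m) * th (K / A * q ^ m) * th (X * q ^ Suc m))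
    = X * (th (K / X * q ^ m) * th (X * q / B * q ^ m) * th (X * q / C * q ^ m) * th (q * A * q ^ m))
      + K * q ^ m * (th (K * q ^ (2 * m + 1)) * th B * th C * th (X / A))"
proof -
  define c1 c2 Y where "c1 = K * q ^ m / X" "c2 = K * q ^ m / A" "Y = K / (q * X * A)"
  have nz: "c1 \<noteq> 0" "c2 \<noteq> 0" "Y \<noteq> 0" using X A K q0 by (auto simp: c1_c2_Y_def)
  have af: "AFe c1 c2 1 Y B = 0" by (rule AF[OF nz(1,2) _ nz(3) B]) simp
  have Cv: "C = q * X * A / (B * K)" using rel B K by (simp add: field_simps)
  have e1: "Ph c1 Y B = th (B * K / X * q ^ m) * th (C * K / X * q ^ m)"
  proof -
    have "c1 * B = B * K / X * q ^ m" by (simp add: c1_c2_Y_def)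
    moreover have "c1 / (Y * B) = C * K / X * q ^ m" using X A K B q0 unfolding Cv by (simp add: c1_c2_Y_def field_simps)
    ultimately show ?thesis by (simp add: Ph_def)
  qed
  have e2: "Ph c2 Y B = th (X * q / C * q ^ m) * th (X * q / B * q ^ m)"
  proof -
    have "c2 * B = X * q / C * q ^ m" using X A K B q0 unfolding Cv by (simp add: c1_c2_Y_def field_simps)
    moreover have "c2 / (Y * B) = X * q / B * q ^ m" using X A K B q0 by (simp add: c1_c2_Y_def field_simps)
    ultimately show ?thesis by (simp add: Ph_def)
  qed
  have e3: "Ph 1 Y B = th B * th C"
  proof -
    have "1 / (Y * B) = C" using X A K B q0 unfolding Cv by (simp add: c1_c2_Y_def field_simps)
    then show ?thesis by (simp add: Ph_def)
  qed
  have qq: "q ^ (2 * m + 1) = q ^ m * q ^ m * q" by (simp add: mult_2 power_add)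
  have a1: "c2 * 1 / Y = X * q ^ Suc m" "c2 / 1 = K / A * q ^ m" "c1 * 1 / Y = q * A * q ^ m"
    "c1 / 1 = K / X * q ^ m" "c1 * c2 / Y = K * q ^ (2 * m + 1)" "c1 / c2 = A / X"
    using X A K q0 unfolding qq by (auto simp: c1_c2_Y_def field_simps)
  have s: "th (A / X) = - (A / X) * th (X / A)" by (rule th_swap[OF X A])
  from af show ?thesis unfolding AFe_def e1 e2 e3 a1 s using X A q0
    by (simp add: field_simps c1_c2_Y_def)
qed

lemma Rrec:
  assumes X: "X \<noteq> 0" and A: "A \<noteq> 0" and K: "K \<noteq> 0" and B: "B \<noteq> 0" and C: "C \<noteq> 0"
    and rel: "B * C * K = q * X * A" and G: "Gd X A B C (Suc m)"
  shows "Rr X A K B C (Suc m) = C1c X K m * Rr X A K B C m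
           + C2c X A K B C m * Rr (X * q\<^sup>2) (A * q) (K * q) (B * q) (C * q) m"
proof -
  have Gs: "th X \<noteq> 0" "th A \<noteq> 0" "ep (q * X) (2 * Suc m) \<noteq> 0" "ep q (Suc m) \<noteq> 0"
    "ep (X * q / B) (Suc m) \<noteq> 0" "ep (X * q / C) (Suc m) \<noteq> 0" "ep (q * A) (Suc m) \<noteq> 0"
    using G by (auto simp: Gd_def)
  have thqA: "th (q * A) \<noteq> 0" using Gd_th_qA[OF G, of 1] by (simp add: mult.commute)
  have thAq: "th (A * q) \<noteq> 0" using thqA by (simp add: mult.commute)
  have nzB: "th (X * q / B) \<noteq> 0" using ep_nz_th[OF Gs(5), of 0] by simp
  have nzC: "th (X * q / C) \<noteq> 0" using ep_nz_th[OF Gs(6), of 0] by simp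
  have g1: "th (X * q ^ Suc m) \<noteq> 0" using Gd_th_qX[OF G, of "Suc m"] by simp
  have g2: "th (q ^ Suc m) \<noteq> 0" using Gd_th_q[OF G, of "Suc m"] by simp
  have rel': "B * q * (C * q) * (K * q) = q * (X * q\<^sup>2) * (A * q)" using rel by (simp add: algebra_simps power2_eq_square)
  define EB where "EB = ep (B * K / X) m"
  define EC where "EC = ep (C * K / X) m"
  define EKA where "EKA = ep (K / A) m"
  define EK where "EK = ep K m"
  define EKq where "EKq = ep (K * q) m"
  define DB where "DB = ep (X * q / B) m"
  define DC where "DC = ep (X * q / C) m"
  define DA where "DA = ep (q * A) m"
  define Dq where "Dq = ep q m"
  have nzD: "DB \<noteq> 0" "DC \<noteq> 0" "DA \<noteq> 0" "Dq \<noteq> 0" "th (X * q / B * q ^ m) \<noteq> 0"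
    "th (X * q / C * q ^ m) \<noteq> 0" "th (q * A * q ^ m) \<noteq> 0" "th (q * q ^ m) \<noteq> 0"
    using Gs(5,6,7,4) unfolding DB_def DC_def DA_def Dq_def ep_Suc by auto
  have r1: "Rr X A K B C (Suc m) = EB * th (B * K / X * q ^ m) * (EC * th (C * K / X * q ^ m)) * (th K * EKq)
       * (EKA * th (K / A * q ^ m)) / (DB * th (X * q / B * q ^ m) * (DC * th (X * q / C * q ^ m))
       * (DA * th (q * A * q ^ m)) * (Dq * th (q * q ^ m))) * X ^ Suc m"
    unfolding Rr_form[OF X A K B C rel Gs(2)] ep_Suc[of "B * K / X"] ep_Suc[of "C * K / X"] ep_Suc2[of K]
      ep_Suc[of "K / A"] ep_Suc[of "X * q / B"] ep_Suc[of "X * q / C"] ep_Suc[of "q * A"] ep_Suc[of q]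
      EB_def EC_def EKA_def EKq_def DB_def DC_def DA_def Dq_def ..
  have r2: "C1c X K m * Rr X A K B C m = X * th (K / X * q ^ m) / (th (X * q ^ Suc m) * th (q ^ Suc m))
       * (EB * EC * (EK * th (K * q ^ m)) * EKA / (DB * DC * DA * Dq) * X ^ m)"
    unfolding Rr_form[OF X A K B C rel Gs(2)] C1c_def EB_def EC_def EKA_def EK_def DB_def DC_def DA_def Dq_def
    by (simp add: field_simps)
  have eK: "EK * th (K * q ^ m) = th K * EKq" unfolding EK_def EKq_def by (metis ep_Suc ep_Suc2)
  have eB: "ep (X * q / B * q) m = DB * th (X * q / B * q ^ m) / th (X * q / B)"
    unfolding DB_def using nzB by (metis ep_Suc ep_Suc2 nonzero_mult_div_cancel_left)
  have eC: "ep (X * q / C * q) m = DC * th (X * q / C * q ^ m) / th (X * q / C)"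
    unfolding DC_def using nzC by (metis ep_Suc ep_Suc2 nonzero_mult_div_cancel_left)
  have eA: "ep (q * A * q) m = DA * th (q * A * q ^ m) / th (q * A)"
    unfolding DA_def using thqA by (metis ep_Suc ep_Suc2 nonzero_mult_div_cancel_left)
  have r3: "Rr (X * q\<^sup>2) (A * q) (K * q) (B * q) (C * q) m = EB * EC * EKq * EKA
       / (ep (X * q / B * q) m * ep (X * q / C * q) m * ep (q * A * q) m * Dq) * (X * q\<^sup>2) ^ m"
  proof -
    have a: "B * q * (K * q) / (X * q\<^sup>2) = B * K / X" "C * q * (K * q) / (X * q\<^sup>2) = C * K / X"
      "K * q / (A * q) = K / A" "X * q\<^sup>2 * q / (B * q) = X * q / B * q" "X * q\<^sup>2 * q / (C * q) = X * q / C * q"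
      "q * (A * q) = q * A * q"
      using q0 X A B C by (auto simp: field_simps power2_eq_square)
    have XA: "X * q\<^sup>2 \<noteq> 0" "A * q \<noteq> 0" "K * q \<noteq> 0" "B * q \<noteq> 0" "C * q \<noteq> 0" using X A K B C q0 by auto
    show ?thesis unfolding Rr_form[OF XA rel' thAq] a EB_def EC_def EKA_def EKq_def Dq_def ..
  qed
  have af: "X * (th (B * K / X * q ^ m) * th (C * K / X * q ^ m) * th (K / A * q ^ m) * th (X * q ^ Suc m))
    - (X * (th (K / X * q ^ m) * th (X * q / B * q ^ m) * th (X * q / C * q ^ m) * th (q * A * q ^ m))
      + K * q ^ m * (th (K * q ^ (2 * m + 1)) * th B * th C * th (X / A))) = 0"
    using AFr[OF X A K B C rel, of m] by simp
  have pw: "(X * q\<^sup>2) ^ m = X ^ m * q ^ m * q ^ m" by (simp add: power_mult_distrib power2_eq_square)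
  define Z where "Z = EB * EC * th K * EKq * EKA * X ^ m / (DB * DC * DA * Dq * th (X * q / B * q ^ m)
      * th (X * q / C * q ^ m) * th (q * A * q ^ m) * th (q * q ^ m) * th (X * q ^ Suc m))"
  have key: "Rr X A K B C (Suc m) - (C1c X K m * Rr X A K B C m
           + C2c X A K B C m * Rr (X * q\<^sup>2) (A * q) (K * q) (B * q) (C * q) m)
    = Z * (X * (th (B * K / X * q ^ m) * th (C * K / X * q ^ m) * th (K / A * q ^ m) * th (X * q ^ Suc m))
    - (X * (th (K / X * q ^ m) * th (X * q / B * q ^ m) * th (X * q / C * q ^ m) * th (q * A * q ^ m))
      + K * q ^ m * (th (K * q ^ (2 * m + 1)) * th B * th C * th (X / A))))"
    unfolding r1 r2 eK r3 eB eC eA C2c_def pw Z_def using nzD g1 g2 nzB nzC thqA q0 X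
    by (simp add: field_simps)
  show ?thesis using key af by simp
qed

lemma Gd_shift:
  assumes G: "Gd X A B C (Suc m)" and B: "B \<noteq> 0" and C: "C \<noteq> 0" and A: "A \<noteq> 0" and X: "X \<noteq> 0"
  shows "Gd (X * q\<^sup>2) (A * q) (B * q) (C * q) m"
proof -
  have Gs: "th X \<noteq> 0" "th A \<noteq> 0" "ep (q * X) (2 * Suc m) \<noteq> 0" "ep q (Suc m) \<noteq> 0"
    "ep (X * q / B) (Suc m) \<noteq> 0" "ep (X * q / C) (Suc m) \<noteq> 0" "ep (q * A) (Suc m) \<noteq> 0"
    using G by (auto simp: Gd_def)
  have a: "q * (X * q\<^sup>2) = q * X * q * q" "X * q\<^sup>2 * q / (B * q) = X * q / B * q"
    "X * q\<^sup>2 * q / (C * q) = X * q / C * q" "q * (A * q) = q * A * q"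
    using q0 B C by (auto simp: field_simps power2_eq_square)
  have "th (X * q\<^sup>2) \<noteq> 0" using Gd_th_qX[OF G, of 2] by simp
  moreover have "th (A * q) \<noteq> 0" using Gd_th_qA[OF G, of 1] by simp
  moreover have "ep (q * X * q * q) (2 * m) \<noteq> 0"
  proof -
    have "ep (q * X) (Suc (Suc (2 * m))) = th (q * X) * th (q * X * q) * ep (q * X * q * q) (2 * m)" by (rule ep_SS)
    then show ?thesis using Gs(3) by auto
  qed
  moreover have "ep q m \<noteq> 0" using ep_nz_le[OF Gs(4)] by simp
  moreover have "ep (X * q / B * q) m \<noteq> 0" using Gs(5) by (simp add: ep_Suc2)
  moreover have "ep (X * q / C * q) m \<noteq> 0" using Gs(6) by (simp add: ep_Suc2)
  moreover have "ep (q * A * q) m \<noteq> 0" using Gs(7) by (simp add: ep_Suc2)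
  ultimately show ?thesis unfolding Gd_def a by simp
qed

lemma Core:
  "\<forall>X A K B C. X \<noteq> 0 \<longrightarrow> A \<noteq> 0 \<longrightarrow> K \<noteq> 0 \<longrightarrow> B \<noteq> 0 \<longrightarrow> C \<noteq> 0 \<longrightarrow>
     B * C * K = q * X * A \<longrightarrow> Gd X A B C n \<longrightarrow> (\<Sum>l\<le>n. Tt X A K B C n l) = Rr X A K B C n"
proof (induction n)
  case 0
  show ?case
  proof (intro allI impI)
    fix X A K B C :: complex
    assume "Gd X A B C 0"
    then have "th X \<noteq> 0" "th A \<noteq> 0" by (auto simp: Gd_def)
    then show "(\<Sum>l\<le>0. Tt X A K B C 0 l) = Rr X A K B C 0"
      by (simp add: Tt_def Rr_def Mcoef_def Dcoef_def)
  qed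
next
  case (Suc m)
  show ?case
  proof (intro allI impI)
    fix X A K B C :: complex
    assume X: "X \<noteq> 0" and A: "A \<noteq> 0" and K: "K \<noteq> 0" and B: "B \<noteq> 0" and C: "C \<noteq> 0"
      and rel: "B * C * K = q * X * A" and G: "Gd X A B C (Suc m)"
    have rel': "B * q * (C * q) * (K * q) = q * (X * q\<^sup>2) * (A * q)" using rel by (simp add: algebra_simps power2_eq_square)
    have nz': "X * q\<^sup>2 \<noteq> 0" "A * q \<noteq> 0" "K * q \<noteq> 0" "B * q \<noteq> 0" "C * q \<noteq> 0" using X A K B C q0 by auto
    have IH1: "(\<Sum>l\<le>m. Tt X A K B C m l) = Rr X A K B C m"
      using Suc.IH X A K B C rel Gd_mono[OF G, of m] by simp
    have IH2: "(\<Sum>l\<le>m. Tt (X * q\<^sup>2) (A * q) (K * q) (B * q) (C * q) m l) = Rr (X * q\<^sup>2) (A * q) (K * q) (B * q) (C * q) m"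
      using Suc.IH nz' rel' Gd_shift[OF G B C A X] by blast
    define T where "T n l = Tt X A K B C n l" for n l
    define T' where "T' l = Tt (X * q\<^sup>2) (A * q) (K * q) (B * q) (C * q) m l" for l
    define c1 where "c1 = C1c X K m"
    define c2 where "c2 = C2c X A K B C m"
    have mid: "T (Suc m) (Suc j) = c1 * T m (Suc j) + c2 * T' j" if "j < m" for j
      unfolding T_def T'_def c1_def c2_def using TW_mid[OF _ X A K B C rel G] that by simp
    have sp: "(\<Sum>j\<le>m. T (Suc m) (Suc j)) = (\<Sum>j<m. T (Suc m) (Suc j)) + T (Suc m) (Suc m)"
      unfolding lessThan_Suc_atMost[symmetric] by (rule sum.lessThan_Suc)
    have "(\<Sum>l\<le>Suc m. T (Suc m) l) = T (Suc m) 0 + (\<Sum>j<m. T (Suc m) (Suc j)) + T (Suc m) (Suc m)"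
      unfolding sum.atMost_Suc_shift sp by simp
    also have "\<dots> = c1 * T m 0 + (\<Sum>j<m. c1 * T m (Suc j) + c2 * T' j) + c2 * T' m"
      using mid TW_zero[OF X K G] TW_top[OF X A K B C rel G]
      by (simp add: T_def T'_def c1_def c2_def)
    also have "\<dots> = c1 * (T m 0 + (\<Sum>j<m. T m (Suc j))) + c2 * ((\<Sum>j<m. T' j) + T' m)"
      by (simp add: sum.distrib sum_distrib_left algebra_simps)
    also have "\<dots> = c1 * (\<Sum>l\<le>m. T m l) + c2 * (\<Sum>l\<le>m. T' l)"
    proof -
      have s5: "(\<Sum>l\<le>m. T m l) = T m 0 + (\<Sum>j<m. T m (Suc j))"
        unfolding lessThan_Suc_atMost[symmetric] by (rule sum.lessThan_Suc_shift)
      have s6: "(\<Sum>l\<le>m. T' l) = (\<Sum>j<m. T' j) + T' m"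
        unfolding lessThan_Suc_atMost[symmetric] by (rule sum.lessThan_Suc)
      show ?thesis unfolding s5 s6 ..
    qed
    also have "\<dots> = Rr X A K B C (Suc m)"
      unfolding T_def T'_def c1_def c2_def IH1 IH2 using Rrec[OF X A K B C rel G] by simp
    finally show "(\<Sum>l\<le>Suc m. Tt X A K B C (Suc m) l) = Rr X A K B C (Suc m)" unfolding T_def .
  qed
qed

end


context thpq begin

lemma ShM:
  assumes ln: "l \<le> n" and nz: "th X \<noteq> 0" "th (X * q ^ (2 * m)) \<noteq> 0" "ep (q * X) (2 * m + (n + l)) \<noteq> 0"
    "ep q (n - l) \<noteq> 0"
  shows "Mc (m + n) (m + l) X K * (q ^ (2 * m)) ^ (n - l) * ep (q * X) (2 * m) * th X
       = Mc n l (X * q ^ (2 * m)) (K * q ^ (2 * m)) * ep K (2 * m) * th (X * q ^ (2 * m))"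
proof -
  have a: "K * q ^ (2 * m) / (X * q ^ (2 * m)) = K / X" "q * (X * q ^ (2 * m)) = q * X * q ^ (2 * m)"
    "X * q ^ (2 * m) * q ^ (2 * l) = X * q ^ (2 * (m + l))"
    using q0 by (auto simp: field_simps power_add)
  have b: "m + n + (m + l) = 2 * m + (n + l)" "m + n - (m + l) = n - l" by auto
  have e1: "ep (q * X) (2 * m + (n + l)) = ep (q * X) (2 * m) * ep (q * X * q ^ (2 * m)) (n + l)" by (rule ep_add)
  have e2: "ep K (2 * m + (n + l)) = ep K (2 * m) * ep (K * q ^ (2 * m)) (n + l)" by (rule ep_add)
  have n1: "ep (q * X) (2 * m) \<noteq> 0" "ep (q * X * q ^ (2 * m)) (n + l) \<noteq> 0" using nz(3) unfolding e1 by auto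
  have M1: "Mc (m + n) (m + l) X K = ep K (m + n + (m + l)) * ep (K / X) (m + n - (m + l))
     / (ep (q * X) (m + n + (m + l)) * ep q (m + n - (m + l))) * (th (X * q ^ (2 * (m + l))) / th X) * X ^ (m + n - (m + l))"
    by (rule Mcl) (use ln in simp)
  have M2: "Mc n l (X * q ^ (2 * m)) (K * q ^ (2 * m)) = ep (K * q ^ (2 * m)) (n + l) * ep (K * q ^ (2 * m) / (X * q ^ (2 * m))) (n - l)
     / (ep (q * (X * q ^ (2 * m))) (n + l) * ep q (n - l)) * (th (X * q ^ (2 * m) * q ^ (2 * l)) / th (X * q ^ (2 * m)))
     * (X * q ^ (2 * m)) ^ (n - l)"
    by (rule Mcl[OF ln])
  show ?thesis
    unfolding M1 M2 b a e1 e2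
    using n1 nz(1,2,4) q0 by (simp add: field_simps power_mult_distrib)
qed

lemma ShD:
  assumes nz: "ep (X * q / B) (m + l) \<noteq> 0" "ep (X * q / C) (m + l) \<noteq> 0" and B: "B \<noteq> 0" and C: "C \<noteq> 0"
  shows "Dc (m + l) X B C = Dc m X B C * Dc l (X * q ^ (2 * m)) (B * q ^ m) (C * q ^ m)"
proof -
  have a: "X * q ^ (2 * m) * q / (B * q ^ m) = X * q / B * q ^ m" "X * q ^ (2 * m) * q / (C * q ^ m) = X * q / C * q ^ m"
    "X * q ^ (2 * m) * q / (B * q ^ m * (C * q ^ m)) = X * q / (B * C)"
  proof -
    have qq: "q ^ (2 * m) = q ^ m * q ^ m" by (simp add: mult_2 power_add)
    show "X * q ^ (2 * m) * q / (B * q ^ m) = X * q / B * q ^ m" "X * q ^ (2 * m) * q / (C * q ^ m) = X * q / C * q ^ m"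
      "X * q ^ (2 * m) * q / (B * q ^ m * (C * q ^ m)) = X * q / (B * C)"
      unfolding qq using q0 B C by (auto simp: field_simps)
  qed
  have n1: "ep (X * q / B) m \<noteq> 0" "ep (X * q / B * q ^ m) l \<noteq> 0" using nz(1) unfolding ep_add by auto
  have n2: "ep (X * q / C) m \<noteq> 0" "ep (X * q / C * q ^ m) l \<noteq> 0" using nz(2) unfolding ep_add by auto
  show ?thesis unfolding Dcoef_def a ep_add[of _ m l] using n1 n2
    by (simp add: field_simps power_add)
qed

lemma DD3:
  assumes X: "X \<noteq> 0" and A: "A \<noteq> 0" and K: "K \<noteq> 0" and B: "B \<noteq> 0" and C: "C \<noteq> 0"
    and rel: "B * C * K = q * X * A"
    and nz: "ep (X * q / B) k \<noteq> 0" "ep (X * q / C) k \<noteq> 0" "ep (A * q / B) k \<noteq> 0" "ep (A * q / C) k \<noteq> 0"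
  shows "Dc k X B C = Dc k K (B * K / X) (C * K / X) * Dc k A B C"
proof -
  have Cv: "C = q * X * A / (B * K)" using rel B K by (simp add: field_simps)
  have a: "K * q / (B * K / X) = X * q / B" "K * q / (C * K / X) = X * q / C" "B * K / X = A * q / C" "C * K / X = A * q / B"
    using X K B C A q0 unfolding Cv by (auto simp: field_simps)
  have b: "K * q / (B * K / X * (C * K / X)) = X / A" "A * q / (B * C) = K / X" "X * q / (B * C) = K / A"
    using X K B C A q0 unfolding Cv by (auto simp: field_simps)
  show ?thesis unfolding Dcoef_def
    unfolding a(1,2) b
    unfolding a(3,4)
    using nz X A K by (simp add: field_simps power_divide)
qed

lemma th_qz: "ep (q * z) M \<noteq> 0 \<Longrightarrow> j \<le> M \<Longrightarrow> th z \<noteq> 0 \<Longrightarrow> th (z * q ^ j) \<noteq> 0"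
proof -
  assume e: "ep (q * z) M \<noteq> 0" and j: "j \<le> M" and t: "th z \<noteq> 0"
  show ?thesis
  proof (cases j)
    case 0 then show ?thesis using t by simp
  next
    case (Suc j')
    have "th (q * z * q ^ j') \<noteq> 0" using ep_nz_th[OF e, of j'] j Suc by simp
    moreover have "q * z * q ^ j' = z * q ^ j" using Suc by simp
    ultimately show ?thesis by metis
  qed
qed

lemma EntryL:
  assumes X: "X \<noteq> 0" and A: "A \<noteq> 0" and K: "K \<noteq> 0" and B: "B \<noteq> 0" and C: "C \<noteq> 0"
    and rel: "B * C * K = q * X * A"
    and g: "th X \<noteq> 0" "th A \<noteq> 0" "ep (q * X) (2 * (k + n)) \<noteq> 0" "ep q (k + n) \<noteq> 0"
      "ep (X * q / B) (k + n) \<noteq> 0" "ep (X * q / C) (k + n) \<noteq> 0" "ep (q * A) (2 * k + n) \<noteq> 0"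
      "ep (A * q / B) k \<noteq> 0" "ep (A * q / C) k \<noteq> 0"
  shows "(\<Sum>l\<le>n. Mc (k + n) (k + l) X K * Dc (k + l) X B C * Mc (k + l) k A X)
       = Dc (k + n) K (B * K / X) (C * K / X) * Mc (k + n) k A K * Dc k A B C"
proof -
  define X2 A2 K2 B2 C2 where "X2 = X * q ^ (2 * k)" "A2 = A * q ^ (2 * k)" "K2 = K * q ^ (2 * k)"
    "B2 = B * q ^ k" "C2 = C * q ^ k"
  have nz2: "X2 \<noteq> 0" "A2 \<noteq> 0" "K2 \<noteq> 0" "B2 \<noteq> 0" "C2 \<noteq> 0" using X A K B C q0 by (auto simp: X2_A2_K2_B2_C2_def)
  have qq: "q ^ (2 * k) = q ^ k * q ^ k" by (simp add: mult_2 power_add)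
  have rel2: "B2 * C2 * K2 = q * X2 * A2" using rel unfolding X2_A2_K2_B2_C2_def qq by (simp add: algebra_simps)
  have tX2: "th X2 \<noteq> 0" unfolding X2_A2_K2_B2_C2_def by (rule th_qz[OF g(3) _ g(1)]) simp
  have tA2: "th A2 \<noteq> 0" unfolding X2_A2_K2_B2_C2_def by (rule th_qz[OF g(7) _ g(2)]) simp
  have eX: "ep (q * X) (2 * k + 2 * n) = ep (q * X) (2 * k) * ep (q * X2) (2 * n)"
    unfolding ep_add X2_A2_K2_B2_C2_def by (simp add: mult.assoc)
  have eA: "ep (q * A) (2 * k + n) = ep (q * A) (2 * k) * ep (q * A2) n"
    unfolding ep_add X2_A2_K2_B2_C2_def by (simp add: mult.assoc)
  have eB: "ep (X * q / B) (k + n) = ep (X * q / B) k * ep (X2 * q / B2) n"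
  proof -
    have "X2 * q / B2 = X * q / B * q ^ k" using q0 B unfolding X2_A2_K2_B2_C2_def qq by (simp add: field_simps)
    then show ?thesis by (simp add: ep_add)
  qed
  have eC: "ep (X * q / C) (k + n) = ep (X * q / C) k * ep (X2 * q / C2) n"
  proof -
    have "X2 * q / C2 = X * q / C * q ^ k" using q0 C unfolding X2_A2_K2_B2_C2_def qq by (simp add: field_simps)
    then show ?thesis by (simp add: ep_add)
  qed
  have g3: "ep (q * X) (2 * k + 2 * n) \<noteq> 0" using g(3) by (simp add: algebra_simps)
  have G2: "Gd X2 A2 B2 C2 n"
    unfolding Gd_def using tX2 tA2 g3 eX ep_nz_le[OF g(4), of n] g(5,6,7) eB eC eA by auto
  have core: "(\<Sum>l\<le>n. Tt X2 A2 K2 B2 C2 n l) = Rr X2 A2 K2 B2 C2 n"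
    using Core nz2 rel2 G2 by blast
  have tq: "ep (q * X) (2 * k) \<noteq> 0" "ep (q * A) (2 * k) \<noteq> 0" "(q ^ (2 * k)) ^ n \<noteq> 0" using eX eA g3 g(7) q0 by auto
  define Fc where "Fc = ep K (2 * k) * th X2 / (ep (q * X) (2 * k) * th X) * Dc k X B C
      * (ep X (2 * k) * th A2 / (ep (q * A) (2 * k) * th A)) / (q ^ (2 * k)) ^ n"
  have TR: "Mc (k + n) (k + l) X K * Dc (k + l) X B C * Mc (k + l) k A X = Fc * Tt X2 A2 K2 B2 C2 n l" if ln: "l \<le> n" for l
  proof -
    have s1: "Mc (k + n) (k + l) X K * (q ^ (2 * k)) ^ (n - l) * ep (q * X) (2 * k) * th X = Mc n l X2 K2 * ep K (2 * k) * th X2"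
      unfolding X2_A2_K2_B2_C2_def
      by (rule ShM[OF ln g(1) tX2[unfolded X2_A2_K2_B2_C2_def]]) (use ln ep_nz_le[OF g3] ep_nz_le[OF g(4)] in auto)
    have s2: "Mc (k + l) (k + 0) A X * (q ^ (2 * k)) ^ (l - 0) * ep (q * A) (2 * k) * th A = Mc l 0 A2 X2 * ep X (2 * k) * th A2"
      unfolding X2_A2_K2_B2_C2_def
      by (rule ShM[OF _ g(2) tA2[unfolded X2_A2_K2_B2_C2_def]]) (use ln ep_nz_le[OF g(7)] ep_nz_le[OF g(4)] in auto)
    have s3: "Dc (k + l) X B C = Dc k X B C * Dc l X2 B2 C2"
      unfolding X2_A2_K2_B2_C2_def by (rule ShD[OF _ _ B C]) (use ln ep_nz_le[OF g(5)] ep_nz_le[OF g(6)] in auto)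
    have pw: "(q ^ (2 * k)) ^ n = (q ^ (2 * k)) ^ (n - l) * (q ^ (2 * k)) ^ l"
      using ln by (simp add: power_add[symmetric])
    have m1: "Mc (k + n) (k + l) X K = Mc n l X2 K2 * ep K (2 * k) * th X2 / ((q ^ (2 * k)) ^ (n - l) * ep (q * X) (2 * k) * th X)"
      using s1 tq g(1) q0 by (simp add: field_simps)
    have m2: "Mc (k + l) k A X = Mc l 0 A2 X2 * ep X (2 * k) * th A2 / ((q ^ (2 * k)) ^ l * ep (q * A) (2 * k) * th A)"
      using s2 tq g(2) q0 by (simp add: field_simps)
    show ?thesis unfolding m1 m2 s3 Tt_def Fc_def pw using tq g(1,2) q0 by (simp add: field_simps)
  qed
  have lhs: "(\<Sum>l\<le>n. Mc (k + n) (k + l) X K * Dc (k + l) X B C * Mc (k + l) k A X) = Fc * Rr X2 A2 K2 B2 C2 n"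
    using TR core by (simp add: sum_distrib_left[symmetric])
  have r1: "Dc (k + n) K (B * K / X) (C * K / X) = Dc k K (B * K / X) (C * K / X) * Dc n K2 (B2 * K2 / X2) (C2 * K2 / X2)"
  proof -
    have a: "K * q / (B * K / X) = X * q / B" "K * q / (C * K / X) = X * q / C" using K X B C by auto
    have b: "K * q ^ (2 * k) = K2" "B * K / X * q ^ k = B2 * K2 / X2" "C * K / X * q ^ k = C2 * K2 / X2"
      using q0 X unfolding X2_A2_K2_B2_C2_def qq by (auto simp: field_simps)
    have "Dc (k + n) K (B * K / X) (C * K / X) = Dc k K (B * K / X) (C * K / X) * Dc n (K * q ^ (2 * k)) (B * K / X * q ^ k) (C * K / X * q ^ k)"
    proof (rule ShD)
      show "ep (K * q / (B * K / X)) (k + n) \<noteq> 0" unfolding a(1) by (rule g(5))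
      show "ep (K * q / (C * K / X)) (k + n) \<noteq> 0" unfolding a(2) by (rule g(6))
    qed (use K X B C in auto)
    then show ?thesis unfolding b .
  qed
  have r2: "Mc (k + n) (k + 0) A K * (q ^ (2 * k)) ^ (n - 0) * ep (q * A) (2 * k) * th A = Mc n 0 A2 K2 * ep K (2 * k) * th A2"
    unfolding X2_A2_K2_B2_C2_def
    by (rule ShM[OF _ g(2) tA2[unfolded X2_A2_K2_B2_C2_def]]) (use ep_nz_le[OF g(7)] ep_nz_le[OF g(4)] in auto)
  have r2': "Mc (k + n) k A K = Mc n 0 A2 K2 * ep K (2 * k) * th A2 / ((q ^ (2 * k)) ^ n * ep (q * A) (2 * k) * th A)"
    using r2 tq g(2) q0 by (simp add: field_simps)
  have dd: "Dc k X B C = Dc k K (B * K / X) (C * K / X) * Dc k A B C"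
    by (rule DD3[OF X A K B C rel]) (use ep_nz_le[OF g(5)] ep_nz_le[OF g(6)] g(8,9) in auto)
  have ex: "ep X (2 * k) * th X2 = th X * ep (q * X) (2 * k)"
  proof -
    have "ep X (Suc (2 * k)) = ep X (2 * k) * th X2" unfolding X2_A2_K2_B2_C2_def by (rule ep_Suc)
    moreover have "ep X (Suc (2 * k)) = th X * ep (q * X) (2 * k)" by (simp add: ep_Suc2 mult.commute)
    ultimately show ?thesis by simp
  qed
  show ?thesis
    unfolding lhs r1 r2' Rr_def Fc_def dd
    using tq g(1,2) ex q0 by (simp add: field_simps)
qed

end


lemma sum_delta_r: "l \<le> (N::nat) \<Longrightarrow> (\<Sum>l'\<le>N. f l' * (if l' = l then d l' else 0)) = f l * (d l :: complex)"
proof -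
  assume l: "l \<le> N"
  have "(\<Sum>l'\<le>N. f l' * (if l' = l then d l' else 0)) = (\<Sum>l'\<le>N. if l' = l then f l * d l else 0)"
    by (rule sum.cong) auto
  also have "\<dots> = f l * d l" using l by (subst sum.delta) auto
  finally show ?thesis .
qed

lemma sum_delta_l: "i \<le> (N::nat) \<Longrightarrow> (\<Sum>l'\<le>N. (if i = l' then d else 0) * g l') = (d :: complex) * g i"
proof -
  assume i: "i \<le> N"
  have "(\<Sum>l'\<le>N. (if i = l' then d else 0) * g l') = (\<Sum>l'\<le>N. if i = l' then d * g i else 0)"
    by (rule sum.cong) auto
  also have "\<dots> = d * g i" using i by (subst sum.delta') auto
  finally show ?thesis .
qed

context thpq begin

lemma part1_lemma:
  assumes "A * q / b' = c" "A * q / c' = b" "A * q / b = c'" "A * q / c = b'"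
    and "b * c * b' * c' = (A * q)\<^sup>2" and A: "A \<noteq> 0" and bnz: "b \<noteq> 0" "c \<noteq> 0" "b' \<noteq> 0" "c' \<noteq> 0" and nz: "ep b i \<noteq> 0" "ep c i \<noteq> 0" "ep b' i \<noteq> 0" "ep c' i \<noteq> 0"
  shows "Dc i A b' c' * Dc i A b c = 1"
proof -
  have "Dc i A b' c' * Dc i A b c = ep b' i * ep c' i / (ep c i * ep b i) * (A * q / (b' * c')) ^ i
      * (ep b i * ep c i / (ep c' i * ep b' i) * (A * q / (b * c)) ^ i)"
    unfolding Dcoef_def assms(1-4) ..
  also have "\<dots> = (A * q / (b' * c')) ^ i * (A * q / (b * c)) ^ i" using nz by (simp add: field_simps)
  also have "\<dots> = (A * q / (b' * c') * (A * q / (b * c))) ^ i" by (rule power_mult_distrib[symmetric])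
  also have "A * q / (b' * c') * (A * q / (b * c)) = 1"
    using assms(5) bnz A q0 by (simp add: field_simps power2_eq_square)
  finally show ?thesis by simp
qed

end


theorem mainTheorem5:
  fixes p q r y z x k :: complex and N :: nat and u :: triple
  assumes "0 < norm p" "norm p < 1" "0 < norm q" "norm q < 1"
    and "y \<noteq> 0" and "r\<^sup>2 = p * q"
    and "z \<noteq> 0" "x \<noteq> 0" "k \<noteq> 0"
    and "u = (z, x, k)"
    and "gen_S1 p q N u" "gen_S1 p q N (s2 (s1 u))"
    and "gen_S2 p q r y N u" "gen_S2 p q r y N (s2 u)" "gen_S2 p q r y N (s1 u)"
        "gen_S2 p q r y N (s1 (s2 u))"
  shows "mat_eq N (mmul N (S2mat p q r y (s2 u)) (S2mat p q r y u)) idmat \<and>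
         mat_eq N
           (mmul N (mmul N (S1mat p q (s2 (s1 u))) (S2mat p q r y (s1 u))) (S1mat p q u))
           (mmul N (mmul N (S2mat p q r y (s1 (s2 u))) (S1mat p q (s2 u))) (S2mat p q r y u))"
proof -
  have p0: "p \<noteq> 0" and p1: "norm p < 1" and q0: "q \<noteq> 0" using assms(1-4) by auto
  interpret thpq p q by unfold_locales (use p0 p1 q0 in auto)
  have y: "y \<noteq> 0" and rr: "r\<^sup>2 = p * q" and z: "z \<noteq> 0" and x: "x \<noteq> 0" and k: "k \<noteq> 0" and u: "u = (z, x, k)"
    using assms by auto
  have r0: "r \<noteq> 0" using rr p0 q0 by auto
  define X A K B C where "X = x\<^sup>2" "A = z\<^sup>2" "K = k\<^sup>2" "B = r * (x * z / k) * y"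
    "C = r / p * (x * z / k) * inverse y"
  have nz: "X \<noteq> 0" "A \<noteq> 0" "K \<noteq> 0" "B \<noteq> 0" "C \<noteq> 0"
    using x z k r0 y p0 by (auto simp: X_A_K_B_C_def)
  have rel: "B * C * K = q * X * A"
  proof -
    have "B * C * K = r\<^sup>2 / p * (x * z) * (x * z) * (y * inverse y)"
      using k by (simp add: X_A_K_B_C_def field_simps power2_eq_square)
    also have "\<dots> = q * X * A" using y p0 unfolding rr by (simp add: X_A_K_B_C_def field_simps power2_eq_square)
    finally show ?thesis .
  qed
  define b' c' where "b' = r * (z * k / x) * y" "c' = r / p * (z * k / x) * inverse y"
  have S1a: "S1mat p q (s2 (s1 u)) = (\<lambda>n m. Mc n m X K)" by (simp add: S1mat_def s1_def s2_def u X_A_K_B_C_def)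
  have S2a: "S2mat p q r y (s1 u) = (\<lambda>n m. if n = m then Dc n X B C else 0)"
    unfolding S2mat_def s1_def u bpar_def cpar_def X_A_K_B_C_def by (intro ext) simp
  have S1b: "S1mat p q u = (\<lambda>n m. Mc n m A X)" by (simp add: S1mat_def u X_A_K_B_C_def)
  have bK: "r * (k * z / x) * y = B * K / X" "r / p * (k * z / x) * inverse y = C * K / X"
    using x k by (auto simp: X_A_K_B_C_def field_simps power2_eq_square)
  have S2b0: "S2mat p q r y (s1 (s2 u)) = (\<lambda>n m. if n = m then Dc n (k\<^sup>2) (r * (k * z / x) * y) (r / p * (k * z / x) * inverse y) else 0)"
    unfolding S2mat_def s1_def s2_def u bpar_def cpar_def by (intro ext) simp
  have kK: "k\<^sup>2 = K" by (simp add: X_A_K_B_C_def)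
  have S2b: "S2mat p q r y (s1 (s2 u)) = (\<lambda>n m. if n = m then Dc n K (B * K / X) (C * K / X) else 0)"
    unfolding S2b0 bK kK ..
  have S1c: "S1mat p q (s2 u) = (\<lambda>n m. Mc n m A K)" by (simp add: S1mat_def s2_def u X_A_K_B_C_def)
  have bu: "bpar r y u = B" "cpar p r y u = C" by (simp_all add: bpar_def cpar_def u X_A_K_B_C_def mult.commute)
  have S2c: "S2mat p q r y u = (\<lambda>n m. if n = m then Dc n A B C else 0)"
    unfolding S2mat_def bu by (intro ext) (simp add: u X_A_K_B_C_def)
  have bs2: "bpar r y (s2 u) = b'" "cpar p r y (s2 u) = c'" by (simp_all add: bpar_def cpar_def s2_def u b'_c'_def)
  have S2d: "S2mat p q r y (s2 u) = (\<lambda>n m. if n = m then Dc n A b' c' else 0)"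
    unfolding S2mat_def bs2 by (intro ext) (simp add: s2_def u X_A_K_B_C_def)
  have pdef: "p = r\<^sup>2 / q" using rr q0 by simp
  have bc: "A * q / b' = C" "A * q / c' = B" "A * q / B = c'" "A * q / C = b'"
    "B * C * b' * c' = (A * q)\<^sup>2"
    using x z k y r0 q0 unfolding X_A_K_B_C_def b'_c'_def pdef by (auto simp: field_simps power2_eq_square)
  have g1u: "theta (z\<^sup>2) p \<noteq> 0" "\<And>n m. n \<le> N \<Longrightarrow> m \<le> n \<Longrightarrow> epoch p q (q * z\<^sup>2) (n + m) \<noteq> 0 \<and> epoch p q q (n - m) \<noteq> 0"
    using assms(11) by (auto simp: gen_S1_def u)
  have g1s: "theta (x\<^sup>2) p \<noteq> 0" "\<And>n m. n \<le> N \<Longrightarrow> m \<le> n \<Longrightarrow> epoch p q (q * x\<^sup>2) (n + m) \<noteq> 0 \<and> epoch p q q (n - m) \<noteq> 0"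
    using assms(12) by (auto simp: gen_S1_def u s1_def s2_def)
  have g2u: "\<And>n. n \<le> N \<Longrightarrow> ep (A * q / B) n \<noteq> 0 \<and> ep (A * q / C) n \<noteq> 0"
    using assms(13) unfolding gen_S2_def u by (auto simp: bu[unfolded u] X_A_K_B_C_def)
  have g2s2: "\<And>n. n \<le> N \<Longrightarrow> ep (A * q / b') n \<noteq> 0 \<and> ep (A * q / c') n \<noteq> 0"
    using assms(14) unfolding gen_S2_def by (auto simp: bs2[symmetric] s2_def u X_A_K_B_C_def)
  have g2s1: "\<And>n. n \<le> N \<Longrightarrow> ep (X * q / B) n \<noteq> 0 \<and> ep (X * q / C) n \<noteq> 0"
    using assms(15) unfolding gen_S2_def by (auto simp: s1_def u bpar_def cpar_def X_A_K_B_C_def)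
  have P1: "mat_eq N (mmul N (S2mat p q r y (s2 u)) (S2mat p q r y u)) idmat"
    unfolding mat_eq_def
  proof (intro allI impI)
    fix i j assume i: "i \<le> N" and j: "j \<le> N"
    have "mmul N (S2mat p q r y (s2 u)) (S2mat p q r y u) i j = Dc i A b' c' * (if i = j then Dc i A B C else 0)"
      unfolding mmul_def S2d S2c using sum_delta_l[OF i, of "Dc i A b' c'" "\<lambda>l. if l = j then Dc l A B C else 0"]
      by simp
    also have "\<dots> = idmat i j"
    proof (cases "i = j")
      case True
      have "Dc i A b' c' * Dc i A B C = 1"
        by (rule part1_lemma[OF bc nz(2)]) (use nz b'_c'_def x z k y r0 p0 g2u[OF i] g2s2[OF i] bc in auto)
      then show ?thesis using True by (simp add: idmat_def)
    next
      case False then show ?thesis by (simp add: idmat_def)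
    qed
    finally show "mmul N (S2mat p q r y (s2 u)) (S2mat p q r y u) i j = idmat i j" .
  qed
  have P2: "mat_eq N
           (mmul N (mmul N (S1mat p q (s2 (s1 u))) (S2mat p q r y (s1 u))) (S1mat p q u))
           (mmul N (mmul N (S2mat p q r y (s1 (s2 u))) (S1mat p q (s2 u))) (S2mat p q r y u))"
    unfolding mat_eq_def
  proof (intro allI impI)
    fix i j assume i: "i \<le> N" and j: "j \<le> N"
    define F where "F l = Mc i l X K * Dc l X B C * Mc l j A X" for l
    have L: "mmul N (mmul N (S1mat p q (s2 (s1 u))) (S2mat p q r y (s1 u))) (S1mat p q u) i j = (\<Sum>l\<le>N. F l)"
      unfolding mmul_def S1a S2a S1b F_def
    proof (rule sum.cong)
      fix l assume "l \<in> {..N}"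
      then have l: "l \<le> N" by simp
      show "(\<Sum>l'\<le>N. Mc i l' X K * (if l' = l then Dc l' X B C else 0)) * Mc l j A X = Mc i l X K * Dc l X B C * Mc l j A X"
        using sum_delta_r[OF l, of "\<lambda>l'. Mc i l' X K" "\<lambda>l'. Dc l' X B C"] by simp
    qed simp
    have R: "mmul N (mmul N (S2mat p q r y (s1 (s2 u))) (S1mat p q (s2 u))) (S2mat p q r y u) i j
        = Dc i K (B * K / X) (C * K / X) * Mc i j A K * Dc j A B C"
    proof -
      have "mmul N (mmul N (S2mat p q r y (s1 (s2 u))) (S1mat p q (s2 u))) (S2mat p q r y u) i j
          = (\<Sum>l\<le>N. (Dc i K (B * K / X) (C * K / X) * Mc i l A K) * (if l = j then Dc l A B C else 0))"
        unfolding mmul_def S2b S1c S2c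
      proof (rule sum.cong)
        fix l assume "l \<in> {..N}"
        show "(\<Sum>l'\<le>N. (if i = l' then Dc i K (B * K / X) (C * K / X) else 0) * Mc l' l A K) * (if l = j then Dc l A B C else 0)
            = (Dc i K (B * K / X) (C * K / X) * Mc i l A K) * (if l = j then Dc l A B C else 0)"
          using sum_delta_l[OF i, of "Dc i K (B * K / X) (C * K / X)" "\<lambda>l'. Mc l' l A K"] by simp
      qed simp
      also have "\<dots> = Dc i K (B * K / X) (C * K / X) * Mc i j A K * Dc j A B C"
        using sum_delta_r[OF j, of "\<lambda>l. Dc i K (B * K / X) (C * K / X) * Mc i l A K" "\<lambda>l. Dc l A B C"] by simp
      finally show ?thesis .
    qed
    show "mmul N (mmul N (S1mat p q (s2 (s1 u))) (S2mat p q r y (s1 u))) (S1mat p q u) i j =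
          mmul N (mmul N (S2mat p q r y (s1 (s2 u))) (S1mat p q (s2 u))) (S2mat p q r y u) i j"
    proof (cases "j \<le> i")
      case False
      have "F l = 0" for l
        unfolding F_def using False by (cases "l \<le> i") (auto simp: Mcoef_def)
      moreover have "Mc i j A K = 0" using False by (simp add: Mcoef_def)
      ultimately show ?thesis unfolding L R by simp
    next
      case True
      define n where "n = i - j"
      have ijn: "i = j + n" using True by (simp add: n_def)
      have s1: "(\<Sum>l\<le>N. F l) = (\<Sum>l\<in>{j..i}. F l)"
      proof (rule sum.mono_neutral_right)
        show "{j..i} \<subseteq> {..N}" using i by auto
        show "\<forall>l\<in>{..N} - {j..i}. F l = 0"
        proof
          fix l assume "l \<in> {..N} - {j..i}"
          then have "l < j \<or> i < l" by auto
          then show "F l = 0" unfolding F_def by (auto simp: Mcoef_def)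
        qed
      qed simp
      have s2: "(\<Sum>l\<in>{j..i}. F l) = (\<Sum>l\<le>n. F (l + j))"
      proof -
        have eq: "{j..i} = {0 + j..n + j}" using ijn by simp
        have "(\<Sum>l\<in>{j..i}. F l) = (\<Sum>l\<in>{0..n}. F (l + j))"
          unfolding eq by (rule sum.shift_bounds_cl_nat_ivl)
        then show ?thesis by (simp add: atLeast0AtMost)
      qed
      have s3: "(\<Sum>l\<le>n. F (l + j)) = (\<Sum>l\<le>n. Mc (j + n) (j + l) X K * Dc (j + l) X B C * Mc (j + l) j A X)"
        unfolding F_def ijn by (simp add: add.commute)
      have e: "(\<Sum>l\<le>n. Mc (j + n) (j + l) X K * Dc (j + l) X B C * Mc (j + l) j A X)
          = Dc (j + n) K (B * K / X) (C * K / X) * Mc (j + n) j A K * Dc j A B C"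
      proof (rule EntryL[OF nz rel])
        show "th X \<noteq> 0" using g1s(1) by (simp add: X_A_K_B_C_def)
        show "th A \<noteq> 0" using g1u(1) by (simp add: X_A_K_B_C_def)
        have e1: "2 * (j + n) = i + i" using ijn by simp
        have "ep (q * X) (i + i) \<noteq> 0" using g1s(2)[OF i, of i] by (simp add: X_A_K_B_C_def)
        then show "ep (q * X) (2 * (j + n)) \<noteq> 0" unfolding e1 .
        show "ep q (j + n) \<noteq> 0" using g1u(2)[OF i, of 0] ijn by simp
        show "ep (X * q / B) (j + n) \<noteq> 0" "ep (X * q / C) (j + n) \<noteq> 0" using g2s1[OF i] ijn by auto
        have e2: "2 * j + n = i + j" using ijn by simp
        have "ep (q * A) (i + j) \<noteq> 0" using g1u(2)[OF i True] by (simp add: X_A_K_B_C_def)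
        then show "ep (q * A) (2 * j + n) \<noteq> 0" unfolding e2 .
        show "ep (A * q / B) j \<noteq> 0" "ep (A * q / C) j \<noteq> 0" using g2u[OF j] by auto
      qed
      have LL: "mmul N (mmul N (S1mat p q (s2 (s1 u))) (S2mat p q r y (s1 u))) (S1mat p q u) i j
          = Dc i K (B * K / X) (C * K / X) * Mc i j A K * Dc j A B C"
      proof -
        have "mmul N (mmul N (S1mat p q (s2 (s1 u))) (S2mat p q r y (s1 u))) (S1mat p q u) i j
          = (\<Sum>l\<le>n. Mc (j + n) (j + l) X K * Dc (j + l) X B C * Mc (j + l) j A X)"
          unfolding L s1 s2 s3 ..
        also have "\<dots> = Dc (j + n) K (B * K / X) (C * K / X) * Mc (j + n) j A K * Dc j A B C" by (rule e)
        also have "\<dots> = Dc i K (B * K / X) (C * K / X) * Mc i j A K * Dc j A B C" using ijn by simp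
        finally show ?thesis .
      qed
      show ?thesis unfolding LL R ..
    qed
  qed
  show ?thesis using P1 P2 by blast
qed


end
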